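(* For every integer $N\ge16$ there is a constant $C_N<\infty$ such that $\mathrm P(I,\widehat\omega)\,\mathrm P(I,\widehat{\dot\sigma})\le C_N$ for every interval $I\subset\mathbb R$; moreover $\mathrm P(I^\ell_r,\widehat\omega)\,\mathrm P(I^\ell_r,\widehat{\dot\sigma})\ge C_N^{-1}$ for all $I^\ell_r\in\mathcal D$.
   Context: $\mathrm P(I,\mu)=\int_{\mathbb R}\frac{|I|}{(|I|+\operatorname{dist}(x,I))^2}\,d\mu(x)$. Cantor intervals: fix an integer $N\ge16$. Set $I^0_1=[0,1]$. Each interval $I=[a,a+N^{-k}]$ of generation $k$ has two children of generation $k+1$: the left child $I_-=[a,a+N^{-k-1}]$ and the right child $I_+=[a+N^{-k}-N^{-k-1},a+N^{-k}]$. The $2^k$ intervals of generation $k$ are denoted $I^k_j$, $1\le j\le 2^k$, numbered left to right; $\mathcal D$ is the collection of all of them. $\dot z^k_j$ is the center of $I^k_j$. The Cantor set is $\mathsf E^{(N)}=\bigcap_{k}\bigcup_{j}I^k_j$. Redistributed Cantor measure: with $\eta=1/N$, $\widehat\omega$ is the unique Borel probability measure supported on $\mathsf E^{(N)}$ such that $\widehat\omega(I^1_1)=\widehat\omega(I^1_2)=\frac12$ and for every $I\in\mathcal D$ of generation $\ge1$: if $I$ is the left child of its parent then $\widehat\omega(I_-)=\frac{1+\eta}2\widehat\omega(I)$, $\widehat\omega(I_+)=\frac{1-\eta}2\widehat\omega(I)$; if $I$ is the right child of its parent then $\widehat\omega(I_-)=\frac{1-\eta}2\widehat\omega(I)$,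 $\widehat\omega(I_+)=\frac{1+\eta}2\widehat\omega(I)$. Weights: $\widehat s^k_j=N^{-2k}/\widehat\omega(I^k_j)$; $\widehat{\dot\sigma}=\sum_{k\ge0}\sum_{j=1}^{2^k}\widehat s^k_j\,\delta_{\dot z^k_j}$. *)

theory Defs
  imports "HOL-Probability.Probability"
begin

text \<open>Poisson-type functional P(I,mu) for a bounded interval I, with |I| = Sup I - Inf I
  and dist(x,I) = infdist x I. Valued in ennreal (it may a priori be infinite).\<close>
definition poisson_P :: "real set \<Rightarrow> real measure \<Rightarrow> ennreal" where
  "poisson_P I \<mu> =
     (\<integral>\<^sup>+ x. ennreal ((Sup I - Inf I) / ((Sup I - Inf I) + infdist x I)\<^sup>2) \<partial>\<mu>)"

text \<open>Left endpoints of the Cantor intervals I^k_j; here j is 0-based, 0 \<le> j < 2^k,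
  numbered left to right; the children of (k,j) are (k+1,2j) (left) and (k+1,2j+1) (right).\<close>
fun cantor_left :: "nat \<Rightarrow> nat \<Rightarrow> nat \<Rightarrow> real" where
  "cantor_left N 0 j = 0"
| "cantor_left N (Suc k) j =
     cantor_left N k (j div 2) +
     (if odd j then 1 / real N ^ k - 1 / real N ^ Suc k else 0)"

definition cantor_int :: "nat \<Rightarrow> nat \<Rightarrow> nat \<Rightarrow> real set" where
  "cantor_int N k j = {cantor_left N k j .. cantor_left N k j + 1 / real N ^ k}"

definition cantor_center :: "nat \<Rightarrow> nat \<Rightarrow> nat \<Rightarrow> real" where
  "cantor_center N k j = cantor_left N k j + 1 / (2 * real N ^ k)"

definition cantor_set :: "nat \<Rightarrow> real set" where
  "cantor_set N = (\<Inter>k. \<Union>j<2^k. cantor_int N k j)"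

definition redistributed_cantor_measure :: "nat \<Rightarrow> real measure \<Rightarrow> bool" where
  "redistributed_cantor_measure N \<omega> \<longleftrightarrow>
     prob_space \<omega> \<and> sets \<omega> = sets borel \<and>
     emeasure \<omega> (UNIV - cantor_set N) = 0 \<and>
     measure \<omega> (cantor_int N 1 0) = 1/2 \<and> measure \<omega> (cantor_int N 1 1) = 1/2 \<and>
     (\<forall>k\<ge>1. \<forall>j<2^k.
        (even j \<longrightarrow>
           measure \<omega> (cantor_int N (Suc k) (2*j)) = (1 + 1/real N) / 2 * measure \<omega> (cantor_int N k j) \<and>
           measure \<omega> (cantor_int N (Suc k) (2*j+1)) = (1 - 1/real N) / 2 * measure \<omega> (cantor_int N k j)) \<and>
        (odd j \<longrightarrow>
           measure \<omega> (cantor_int N (Suc k) (2*j)) = (1 - 1/real N) / 2 * measure \<omega> (cantor_int N k j) \<and>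
           measure \<omega> (cantor_int N (Suc k) (2*j+1)) = (1 + 1/real N) / 2 * measure \<omega> (cantor_int N k j)))"

definition cantor_weight :: "nat \<Rightarrow> real measure \<Rightarrow> nat \<Rightarrow> nat \<Rightarrow> real" where
  "cantor_weight N \<omega> k j = (1 / real N ^ (2*k)) / measure \<omega> (cantor_int N k j)"

definition sigma_dot :: "nat \<Rightarrow> real measure \<Rightarrow> real measure" where
  "sigma_dot N \<omega> = measure_of UNIV (sets borel)
     (\<lambda>A. \<Sum>k. \<Sum>j<2^k. ennreal (cantor_weight N \<omega> k j) * indicator A (cantor_center N k j))"

end

theory Submission
  imports Defs
begin

lemma pow_pos_N: "N \<ge> 16 \<Longrightarrow> (0::real) < real N ^ k" by simp

lemma inv_pow_Suc: "1 / real N ^ Suc k = (1 / real N ^ k) / real N"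
  by simp

lemma left_step_bounds:
  assumes "N \<ge> 16"
  shows "cantor_left N k (j div 2) \<le> cantor_left N (Suc k) j \<and>
         cantor_left N (Suc k) j + 1 / real N ^ Suc k \<le> cantor_left N k (j div 2) + 1 / real N ^ k"
proof -
  have N: "real N \<ge> 16" using assms by simp
  have a: "1 / real N ^ Suc k \<le> 1 / real N ^ k"
    using N by (simp add: divide_simps)
  show ?thesis using a by auto
qed

lemma int_nested_step:
  assumes "N \<ge> 16"
  shows "cantor_int N (Suc k) j \<subseteq> cantor_int N k (j div 2)"
  using left_step_bounds[OF assms, of k j] unfolding cantor_int_def by auto

lemma int_nested:
  assumes "N \<ge> 16"
  shows "cantor_int N (g + t) j \<subseteq> cantor_int N g (j div 2 ^ t)"
proof (induction t arbitrary: j)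
  case 0 then show ?case by simp
next
  case (Suc t)
  have "cantor_int N (g + Suc t) j \<subseteq> cantor_int N (g + t) (j div 2)"
    using int_nested_step[OF assms, of "g+t" j] by simp
  also have "\<dots> \<subseteq> cantor_int N g (j div 2 div 2 ^ t)" by (rule Suc.IH)
  also have "j div 2 div 2 ^ t = j div 2 ^ Suc t"
    by (simp add: div_mult2_eq mult.commute)
  finally show ?case .
qed

lemma int_nested':
  assumes "N \<ge> 16" "g \<le> k"
  shows "cantor_int N k j \<subseteq> cantor_int N g (j div 2 ^ (k - g))"
  using int_nested[OF assms(1), of g "k-g" j] assms(2) by simp

lemma int0: "cantor_int N 0 j = {0..1}"
  by (simp add: cantor_int_def)

lemma int_sub01:
  assumes "N \<ge> 16"
  shows "cantor_int N k j \<subseteq> {0..1}"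
  using int_nested'[OF assms, of 0 k j] by (simp add: int0)

lemma left_sep:
  assumes "N \<ge> 16"
  shows "j < j' \<Longrightarrow> j' < 2 ^ k \<Longrightarrow>
    cantor_left N k j + (real N - 1) / real N ^ k \<le> cantor_left N k j'"
proof (induction k arbitrary: j j')
  case 0 then show ?case by simp
next
  case (Suc k)
  have N: "real N \<ge> 16" using assms by simp
  define t where "t = 1 / real N ^ Suc k"
  have t0: "t > 0" unfolding t_def using N by simp
  have tk: "1 / real N ^ k = real N * t" unfolding t_def using N by (simp add: field_simps)
  have tk2: "(real N - 1) / real N ^ k = (real N - 1) * (real N * t)"
    using tk by (metis times_divide_eq_right mult.right_neutral)
  have tk3: "(real N - 1) / real N ^ Suc k = (real N - 1) * t"
    unfolding t_def by simp
  have L: "\<And>i. cantor_left N (Suc k) i = cantor_left N k (i div 2) + (if odd i then real N * t - t else 0)"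
    by (simp only: cantor_left.simps tk t_def[symmetric])
  have Nt: "real N * t - t \<ge> 0" using N t0 by (simp add: algebra_simps)
  have le: "j div 2 \<le> j' div 2" using Suc.prems by (simp add: div_le_mono)
  have lt: "j' div 2 < 2 ^ k" using Suc.prems by auto
  show ?case
  proof (cases "j div 2 = j' div 2")
    case True
    then have "even j" "odd j'" using Suc.prems(1) by presburger+
    then have e1: "cantor_left N (Suc k) j = cantor_left N k (j div 2)" using L by simp
    have e2: "cantor_left N (Suc k) j' = cantor_left N k (j div 2) + real N * t - t"
      using \<open>odd j'\<close> True L[of j'] by simp
    show ?thesis using e1 e2 tk3 by (simp add: algebra_simps)
  next
    case False
    then have "j div 2 < j' div 2" using le by simp
    from Suc.IH[OF this lt] have ih:
      "cantor_left N k (j div 2) + (real N - 1) * (real N * t) \<le> cantor_left N k (j' div 2)"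
      using tk2 by simp
    have A: "cantor_left N (Suc k) j \<le> cantor_left N k (j div 2) + real N * t - t"
      using L[of j] Nt by auto
    have B: "cantor_left N k (j' div 2) \<le> cantor_left N (Suc k) j'"
      using L[of j'] Nt by auto
    have C: "(real N - 1) * t \<le> (real N - 1) * (real N * t) - real N * t + t"
    proof -
      have "(real N - 1) * (real N * t) - real N * t + t - (real N - 1) * t
            = (real N - 2) * (real N - 1) * t" by (simp add: algebra_simps)
      also have "\<dots> \<ge> 0" using N t0 by simp
      finally show ?thesis by simp
    qed
    show ?thesis using ih A B C tk3 by linarith
  qed
qed

lemma pts_sep:
  assumes "N \<ge> 16" "j < j'" "j' < 2 ^ k" "x \<in> cantor_int N k j" "y \<in> cantor_int N k j'"
  shows "y - x \<ge> (real N - 2) / real N ^ k"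
proof -
  have "cantor_left N k j + (real N - 1) / real N ^ k \<le> cantor_left N k j'"
    using left_sep[OF assms(1-3)] .
  moreover have "(real N - 1) / real N ^ k = (real N - 2) / real N ^ k + 1 / real N ^ k"
    using assms(1) by (simp add: add_divide_distrib[symmetric])
  ultimately show ?thesis using assms(4,5) unfolding cantor_int_def by auto
qed

lemma unique_idx:
  assumes "N \<ge> 16" "i < 2 ^ g" "i' < 2 ^ g" "x \<in> cantor_int N g i" "y \<in> cantor_int N g i'"
    "\<bar>x - y\<bar> < (real N - 2) / real N ^ g"
  shows "i = i'"
proof (rule ccontr)
  assume "i \<noteq> i'"
  then consider "i < i'" | "i' < i" by linarith
  then show False
  proof cases
    case 1 from pts_sep[OF assms(1) 1 assms(3,4,5)] assms(6) show False by linarith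
  next
    case 2 from pts_sep[OF assms(1) 2 assms(2,5,4)] assms(6) show False by linarith
  qed
qed

lemma center_in: "N \<ge> 16 \<Longrightarrow> cantor_center N k j \<in> cantor_int N k j"
  unfolding cantor_center_def cantor_int_def by (auto simp: field_simps)

lemma center_far_child:
  assumes "N \<ge> 16" "y \<in> cantor_int N (Suc k) j'" "j' div 2 = j"
  shows "\<bar>y - cantor_center N k j\<bar> \<ge> 1 / (2 * real N ^ k) - 1 / real N ^ Suc k"
proof -
  have N: "real N \<ge> 16" using assms by simp
  define t where "t = 1 / real N ^ Suc k"
  have tk: "1 / real N ^ k = real N * t" unfolding t_def using N by (simp add: field_simps)
  have tk2: "1 / (2 * real N ^ k) = real N * t / 2" using tk by (simp add: field_simps)
  have t0: "t > 0" unfolding t_def using N by simp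
  show ?thesis
  proof (cases "odd j'")
    case True
    then have "cantor_left N (Suc k) j' = cantor_left N k j + real N * t - t"
      using assms(3) tk t_def by simp
    then show ?thesis using assms(2) tk2 t_def unfolding cantor_int_def cantor_center_def
      by auto
  next
    case False
    then have "cantor_left N (Suc k) j' = cantor_left N k j"
      using assms(3) by simp
    then show ?thesis using assms(2) tk2 t_def unfolding cantor_int_def cantor_center_def
      by auto
  qed
qed

lemma ennreal_suminf_swap:
  fixes F :: "nat \<Rightarrow> nat \<Rightarrow> ennreal"
  shows "(\<Sum>i. \<Sum>k. F i k) = (\<Sum>k. \<Sum>i. F i k)"
proof -
  have "(\<Sum>i. \<Sum>k. F i k) = (\<Sum>i. \<integral>\<^sup>+k. F i k \<partial>count_space UNIV)"
    by (simp add: nn_integral_count_space_nat)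
  also have "\<dots> = (\<integral>\<^sup>+k. (\<Sum>i. F i k) \<partial>count_space UNIV)"
    by (rule nn_integral_suminf[symmetric]) auto
  also have "\<dots> = (\<Sum>k. \<Sum>i. F i k)"
    by (simp add: nn_integral_count_space_nat)
  finally show ?thesis .
qed

lemma sets_sigma_dot: "sets (sigma_dot N \<omega>) = sets borel"
proof -
  have "sets (sigma_dot N \<omega>) = sigma_sets UNIV (sets borel)"
    unfolding sigma_dot_def by (rule sets_measure_of) simp
  then show ?thesis using sets.sigma_sets_eq[of borel] by simp
qed

lemma emeasure_sigma_dot:
  assumes "A \<in> sets borel"
  shows "emeasure (sigma_dot N \<omega>) A =
    (\<Sum>k. \<Sum>j<2^k. ennreal (cantor_weight N \<omega> k j) * indicator A (cantor_center N k j))"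
proof -
  define \<mu> where "\<mu> = (\<lambda>A::real set. \<Sum>k. \<Sum>j<2^k. ennreal (cantor_weight N \<omega> k j) * indicator A (cantor_center N k j))"
  have sa: "sigma_algebra UNIV (sets borel)"
    using sets.sigma_algebra_axioms[of borel] by simp
  have pos: "positive (sets borel) \<mu>" unfolding positive_def \<mu>_def by simp
  have ca: "countably_additive (sets borel) \<mu>"
  proof (rule countably_additiveI)
    fix A :: "nat \<Rightarrow> real set"
    assume "range A \<subseteq> sets borel" "disjoint_family A" "\<Union> (range A) \<in> sets borel"
    have "(\<Sum>i. \<mu> (A i)) = (\<Sum>k. \<Sum>i. \<Sum>j<2^k. ennreal (cantor_weight N \<omega> k j) * indicator (A i) (cantor_center N k j))"
      unfolding \<mu>_def by (rule ennreal_suminf_swap)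
    also have "\<dots> = (\<Sum>k. \<Sum>j<2^k. \<Sum>i. ennreal (cantor_weight N \<omega> k j) * indicator (A i) (cantor_center N k j))"
      by (intro suminf_cong suminf_sum) (auto intro: summableI)
    also have "\<dots> = (\<Sum>k. \<Sum>j<2^k. ennreal (cantor_weight N \<omega> k j) * indicator (\<Union>i. A i) (cantor_center N k j))"
      using suminf_indicator[OF \<open>disjoint_family A\<close>] by simp
    also have "\<dots> = \<mu> (\<Union> (range A))" unfolding \<mu>_def by simp
    finally show "(\<Sum>i. \<mu> (A i)) = \<mu> (\<Union> (range A))" .
  qed
  show ?thesis
    unfolding sigma_dot_def
    using emeasure_measure_of_sigma[OF sa pos ca assms] unfolding \<mu>_def by simp
qed

lemma closed_cantor_set: "closed (cantor_set N)"
  unfolding cantor_set_def cantor_int_def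
  by (intro closed_INT ballI closed_Union) auto

lemma cantor_set_sub: "cantor_set N \<subseteq> (\<Union>i<2^g. cantor_int N g i)"
  unfolding cantor_set_def by blast

lemma cantor_set_sub01: "cantor_set N \<subseteq> {0..1}"
  using cantor_set_sub[of N 0] by (auto simp: int0 lessThan_empty_iff)

lemma div_pow_less: "(j::nat) < 2 ^ k \<Longrightarrow> g \<le> k \<Longrightarrow> j div 2 ^ (k - g) < 2 ^ g"
  by (metis le_add_diff_inverse less_mult_imp_div_less power_add)

locale CM =
  fixes N :: nat and \<omega> :: "real measure"
  assumes N16: "N \<ge> 16" and R: "redistributed_cantor_measure N \<omega>"
begin

lemma prob: "prob_space \<omega>" and sets_om: "sets \<omega> = sets borel"
  and null: "emeasure \<omega> (UNIV - cantor_set N) = 0"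
  using R unfolding redistributed_cantor_measure_def by auto

sublocale P: prob_space \<omega> by (rule prob)

lemma space_om: "space \<omega> = UNIV"
  using sets_eq_imp_space_eq[OF sets_om] by simp

lemma om_emeasure_eq: "emeasure \<omega> A = ennreal (measure \<omega> A)"
  by (rule P.emeasure_eq_measure)

lemma om_le:
  assumes "A \<in> sets borel" "B \<in> sets borel" "A \<inter> cantor_set N \<subseteq> B"
  shows "measure \<omega> A \<le> measure \<omega> B"
proof -
  have K: "UNIV - cantor_set N \<in> sets \<omega>"
    using closed_cantor_set[of N] sets_om by (simp add: borel_closed sets.compl_sets)
  have "emeasure \<omega> A \<le> emeasure \<omega> (B \<union> (UNIV - cantor_set N))"
    using assms K sets_om by (intro emeasure_mono) auto
  also have "\<dots> \<le> emeasure \<omega> B + emeasure \<omega> (UNIV - cantor_set N)"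
    using assms K sets_om by (intro emeasure_subadditive) auto
  also have "\<dots> = emeasure \<omega> B" using null by simp
  finally show ?thesis by (simp add: om_emeasure_eq)
qed

lemma om_zero:
  assumes "A \<in> sets borel" "A \<inter> cantor_set N = {}"
  shows "measure \<omega> A = 0"
  using om_le[OF assms(1), of "{}"] assms(2) measure_nonneg[of \<omega> A] by simp

lemma om_nonneg: "measure \<omega> A \<ge> 0" by simp

lemma om_le1: "measure \<omega> A \<le> 1"
  by (rule P.prob_le_1)

lemma om0: "measure \<omega> (cantor_int N 0 j) = 1"
proof -
  have "measure \<omega> UNIV \<le> measure \<omega> (cantor_int N 0 j)"
    using cantor_set_sub01[of N] by (intro om_le) (auto simp: int0)
  moreover have "measure \<omega> UNIV = 1"
    using P.prob_space space_om by simp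
  ultimately show ?thesis using om_le1[of "cantor_int N 0 j"] by simp
qed

lemma om_step:
  assumes "j < 2 ^ Suc k"
  shows "15/32 * measure \<omega> (cantor_int N k (j div 2)) \<le> measure \<omega> (cantor_int N (Suc k) j) \<and>
         measure \<omega> (cantor_int N (Suc k) j) \<le> 17/32 * measure \<omega> (cantor_int N k (j div 2))"
proof (cases k)
  case 0
  then have "j = 0 \<or> j = 1" using assms by auto
  then show ?thesis using R 0 om0[of 0] unfolding redistributed_cantor_measure_def by auto
next
  case (Suc k')
  define q where "q = j div 2"
  have q: "q < 2 ^ k" using assms unfolding q_def by auto
  have k1: "k \<ge> 1" using Suc by simp
  define p where "p = measure \<omega> (cantor_int N k q)"
  have p0: "p \<ge> 0" unfolding p_def by simp
  have N: "real N \<ge> 16" using N16 by simp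
  have a: "(1 + 1/real N) / 2 * p \<le> 17/32 * p"
  proof -
    have "1/real N \<le> 1/16" using N by (simp add: divide_simps)
    then show ?thesis using p0 by (intro mult_right_mono) auto
  qed
  have b: "15/32 * p \<le> (1 - 1/real N) / 2 * p"
  proof -
    have "1/real N \<le> 1/16" using N by (simp add: divide_simps)
    then show ?thesis using p0 by (intro mult_right_mono) auto
  qed
  have c: "(1 - 1/real N) / 2 * p \<le> (1 + 1/real N) / 2 * p"
    using p0 N by (intro mult_right_mono) auto
  have jj: "j = 2 * q \<or> j = 2 * q + 1" unfolding q_def by presburger
  have cl: "(even q \<longrightarrow>
           measure \<omega> (cantor_int N (Suc k) (2*q)) = (1 + 1/real N) / 2 * p \<and>
           measure \<omega> (cantor_int N (Suc k) (2*q+1)) = (1 - 1/real N) / 2 * p) \<and>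
        (odd q \<longrightarrow>
           measure \<omega> (cantor_int N (Suc k) (2*q)) = (1 - 1/real N) / 2 * p \<and>
           measure \<omega> (cantor_int N (Suc k) (2*q+1)) = (1 + 1/real N) / 2 * p)"
    using R k1 q unfolding redistributed_cantor_measure_def p_def by blast
  define A where "A = (1 + 1/real N) / 2 * p"
  define B where "B = (1 - 1/real N) / 2 * p"
  note cl' = cl[unfolded A_def[symmetric] B_def[symmetric]]
  note a' = a[unfolded A_def[symmetric]]
  note b' = b[unfolded B_def[symmetric]]
  note c' = c[unfolded A_def[symmetric] B_def[symmetric]]
  show ?thesis
    using jj cl' a' b' c' unfolding p_def[symmetric] q_def[symmetric]
    by (cases "even q") auto
qed

lemma om_chain:
  assumes "j < 2 ^ (g + t)"
  shows "(15/32)^t * measure \<omega> (cantor_int N g (j div 2^t)) \<le> measure \<omega> (cantor_int N (g+t) j) \<and>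
         measure \<omega> (cantor_int N (g+t) j) \<le> (17/32)^t * measure \<omega> (cantor_int N g (j div 2^t))"
  using assms
proof (induction t arbitrary: j)
  case 0 then show ?case by simp
next
  case (Suc t)
  have jd: "j div 2 < 2 ^ (g + t)" using Suc.prems by auto
  have e: "j div 2 div 2 ^ t = j div 2 ^ Suc t" by (simp add: div_mult2_eq mult.commute)
  from Suc.IH[OF jd] e have ih:
    "(15/32)^t * measure \<omega> (cantor_int N g (j div 2^Suc t)) \<le> measure \<omega> (cantor_int N (g+t) (j div 2))"
    "measure \<omega> (cantor_int N (g+t) (j div 2)) \<le> (17/32)^t * measure \<omega> (cantor_int N g (j div 2^Suc t))"
    by auto
  from om_step[of j "g+t"] Suc.prems have st:
    "15/32 * measure \<omega> (cantor_int N (g+t) (j div 2)) \<le> measure \<omega> (cantor_int N (g + Suc t) j)"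
    "measure \<omega> (cantor_int N (g + Suc t) j) \<le> 17/32 * measure \<omega> (cantor_int N (g+t) (j div 2))"
    by auto
  have "(15/32)^Suc t * measure \<omega> (cantor_int N g (j div 2^Suc t))
       = 15/32 * ((15/32)^t * measure \<omega> (cantor_int N g (j div 2^Suc t)))" by simp
  also have "\<dots> \<le> 15/32 * measure \<omega> (cantor_int N (g+t) (j div 2))"
    using ih(1) by simp
  also have "\<dots> \<le> measure \<omega> (cantor_int N (g + Suc t) j)" by (rule st(1))
  finally have A: "(15/32)^Suc t * measure \<omega> (cantor_int N g (j div 2^Suc t)) \<le> measure \<omega> (cantor_int N (g + Suc t) j)" .
  have "measure \<omega> (cantor_int N (g + Suc t) j) \<le> 17/32 * measure \<omega> (cantor_int N (g+t) (j div 2))"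
    by (rule st(2))
  also have "\<dots> \<le> 17/32 * ((17/32)^t * measure \<omega> (cantor_int N g (j div 2^Suc t)))"
    using ih(2) by simp
  finally show ?case using A by simp
qed

lemma om_chain':
  assumes "j < 2 ^ k" "g \<le> k"
  shows "(15/32)^(k-g) * measure \<omega> (cantor_int N g (j div 2^(k-g))) \<le> measure \<omega> (cantor_int N k j) \<and>
         measure \<omega> (cantor_int N k j) \<le> (17/32)^(k-g) * measure \<omega> (cantor_int N g (j div 2^(k-g)))"
  using om_chain[of j g "k-g"] assms by simp

lemma om_lower: "j < 2 ^ k \<Longrightarrow> (15/32)^k \<le> measure \<omega> (cantor_int N k j)"
  using om_chain'[of j k 0] om0 by simp

lemma om_pos: "j < 2 ^ k \<Longrightarrow> 0 < measure \<omega> (cantor_int N k j)"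
proof -
  assume "j < 2 ^ k"
  moreover have "(0::real) < (15/32)^k" by simp
  ultimately show ?thesis using om_lower[of j k] by linarith
qed

end

lemma center_not_deeper:
  assumes N: "N \<ge> 16" and "k < g" "i < 2 ^ g" "j < 2 ^ k"
  shows "cantor_center N k j \<notin> cantor_int N g i"
proof
  assume c: "cantor_center N k j \<in> cantor_int N g i"
  define i' where "i' = i div 2 ^ (g - Suc k)"
  have i'lt: "i' < 2 ^ Suc k" unfolding i'_def using div_pow_less[OF assms(3), of "Suc k"] assms(2) by simp
  have "cantor_int N g i \<subseteq> cantor_int N (Suc k) i'"
    unfolding i'_def using int_nested'[OF N, of "Suc k" g i] assms(2) by simp
  with c have c2: "cantor_center N k j \<in> cantor_int N (Suc k) i'" by blast
  show False
  proof (cases "i' div 2 = j")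
    case True
    have "\<bar>cantor_center N k j - cantor_center N k j\<bar> \<ge> 1 / (2 * real N ^ k) - 1 / real N ^ Suc k"
      by (rule center_far_child[OF N c2 True])
    moreover have "1 / real N ^ Suc k < 1 / (2 * real N ^ k)"
      using N by (simp add: divide_simps)
    ultimately show False by simp
  next
    case False
    have "cantor_int N (Suc k) i' \<subseteq> cantor_int N k (i' div 2)" by (rule int_nested_step[OF N])
    with c2 have c3: "cantor_center N k j \<in> cantor_int N k (i' div 2)" by blast
    have "i' div 2 < 2 ^ k" using i'lt by auto
    have "j = i' div 2"
      apply (rule unique_idx[OF N assms(4) \<open>i' div 2 < 2 ^ k\<close> center_in[OF N] c3])
      using N by simp
    with False show False by simp
  qed
qed

lemma center_in_anc:
  assumes N: "N \<ge> 16" and "g \<le> k"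
  shows "cantor_center N k j \<in> cantor_int N g (j div 2 ^ (k - g))"
  using int_nested'[OF N assms(2), of j] center_in[OF N, of k j] by blast

lemma card_desc: "card {j. j < 2 ^ k \<and> j div 2 ^ t = (i::nat)} \<le> 2 ^ t"
proof -
  have "{j. j < 2 ^ k \<and> j div 2 ^ t = i} \<subseteq> {i * 2 ^ t ..< (i+1) * 2 ^ t}"
  proof
    fix j assume "j \<in> {j. j < 2 ^ k \<and> j div 2 ^ t = i}"
    then have "j div 2 ^ t = i" by simp
    then have e: "j = i * 2^t + j mod 2^t" using div_mult_mod_eq[of j "2^t"] by simp
    have md: "j mod 2^t < 2^t" by simp
    have pe: "(i+1)*2^t = i*2^t + 2^t" by (simp add: algebra_simps)
    have "i * 2 ^ t \<le> j" "j < (i+1) * 2 ^ t" using e md pe by linarith+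
    then show "j \<in> {i * 2 ^ t ..< (i+1) * 2 ^ t}" by simp
  qed
  then have "card {j. j < 2 ^ k \<and> j div 2 ^ t = i} \<le> card {i * 2 ^ t ..< (i+1) * 2 ^ t}"
    by (intro card_mono) auto
  also have "\<dots> = 2 ^ t" by (simp add: algebra_simps)
  finally show ?thesis .
qed

definition Ub :: "nat \<Rightarrow> real \<Rightarrow> nat \<Rightarrow> real set" where
  "Ub N c g = {c - 1 / real N ^ g .. c + 1 / real N ^ g}"

lemma Ub_mem: "x \<in> Ub N c g \<longleftrightarrow> \<bar>x - c\<bar> \<le> 1 / real N ^ g"
  unfolding Ub_def by auto

lemma Ub_borel[measurable]: "Ub N c g \<in> sets borel"
  unfolding Ub_def by simp

lemma triA: "(A::real) \<le> B + C \<Longrightarrow> C \<le> D/2 \<Longrightarrow> A - D/2 \<le> B" by linarith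
lemma triB: "(a::real)/2 \<le> d \<Longrightarrow> e < a \<Longrightarrow> f = e/2 \<Longrightarrow> f \<le> d" by linarith
lemma interval_bounds_dummy: True by simp
lemma half_lem: "a - l/2 \<le> (d::real) \<Longrightarrow> l \<le> a \<Longrightarrow> a/2 \<le> d" by linarith
lemma lt_lem: "(b::real) < a \<Longrightarrow> l < e \<Longrightarrow> e \<le> b \<Longrightarrow> l \<le> a" by linarith

lemma step_exists: "P (0::nat) \<Longrightarrow> \<not> P m \<Longrightarrow> \<exists>g<m. P g \<and> \<not> P (Suc g)"
proof (induction m)
  case 0 then show ?case by simp
next
  case (Suc m)
  show ?case
  proof (cases "P m")
    case True then show ?thesis using Suc.prems by auto
  next
    case False then show ?thesis using Suc.IH[OF Suc.prems(1)] less_SucI by blast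
  qed
qed

lemma interval_bounds:
  fixes I :: "real set"
  assumes "bounded I" "I \<noteq> {}" "y \<in> I"
  shows "Inf I \<le> y" "y \<le> Sup I"
proof -
  have "bdd_below I" "bdd_above I" using assms(1) by (auto simp: bounded_imp_bdd_below bounded_imp_bdd_above)
  then show "Inf I \<le> y" "y \<le> Sup I" using assms(3) by (auto intro: cInf_lower cSup_upper)
qed

lemma infdist_lower:
  fixes I :: "real set"
  assumes "bounded I" "I \<noteq> {}"
  shows "infdist x I \<ge> \<bar>x - (Inf I + Sup I)/2\<bar> - (Sup I - Inf I)/2"
proof -
  have "infdist x I = (INF y\<in>I. dist x y)" using assms(2) by (rule infdist_notempty)
  also have "\<dots> \<ge> \<bar>x - (Inf I + Sup I)/2\<bar> - (Sup I - Inf I)/2"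
  proof (rule cINF_greatest)
    show "I \<noteq> {}" by fact
    fix y assume "y \<in> I"
    then have "Inf I \<le> y" "y \<le> Sup I" using interval_bounds[OF assms] by auto
    then have a1: "y - (Inf I + Sup I)/2 \<le> (Sup I - Inf I)/2" by (simp add: field_simps)
    have a2: "-(y - (Inf I + Sup I)/2) \<le> (Sup I - Inf I)/2" using \<open>Inf I \<le> y\<close> by (simp add: field_simps)
    have a: "\<bar>y - (Inf I + Sup I)/2\<bar> \<le> (Sup I - Inf I)/2" using a1 a2 unfolding abs_le_iff by blast
    have b: "\<bar>(x - y) + (y - (Inf I + Sup I)/2)\<bar> \<le> \<bar>x - y\<bar> + \<bar>y - (Inf I + Sup I)/2\<bar>"
      by (rule abs_triangle_ineq)
    show "\<bar>x - (Inf I + Sup I)/2\<bar> - (Sup I - Inf I)/2 \<le> dist x y"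
      unfolding dist_real_def by (rule triA[OF _ a]) (use b in simp)
  qed
  finally show ?thesis .
qed

lemma P_split:
  fixes \<mu> :: "real measure" and I :: "real set"
  assumes N: "N \<ge> 16" and sets: "sets \<mu> = sets borel" and fin: "finite_measure \<mu>"
    and I: "bounded I" "I \<noteq> {}"
    and l1: "1 / real N ^ Suc m \<le> Sup I - Inf I" and l2: "Sup I - Inf I < 1 / real N ^ m"
  defines "ll \<equiv> Sup I - Inf I" and "c \<equiv> (Inf I + Sup I) / 2"
  shows "poisson_P I \<mu> \<le> ennreal (real N ^ Suc m * measure \<mu> (Ub N c m)
           + (\<Sum>g<m. 4 * ll * real N ^ (2*g+2) * measure \<mu> (Ub N c g))
           + 4 * ll * measure \<mu> UNIV)"
proof -
  interpret finite_measure \<mu> by (rule fin)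
  have Nr: "real N \<ge> 16" using N by simp
  have "0 < 1 / real N ^ Suc m" using Nr by simp
  then have l0: "ll > 0" unfolding ll_def using l1 by linarith
  have Nm1: "1 / real N ^ m \<le> 1" using Nr by (simp add: divide_simps)
  have space: "space \<mu> = UNIV" using sets_eq_imp_space_eq[OF sets] by simp
  have Um: "\<And>g. Ub N c g \<in> sets \<mu>" using sets by simp
  define F where "F = (\<lambda>x. ennreal (real N ^ Suc m) * indicator (Ub N c m) x
      + (\<Sum>g<m. ennreal (4 * ll * real N ^ (2*g+2)) * indicator (Ub N c g) x)
      + ennreal (4 * ll))"
  have pw: "ennreal (ll / (ll + infdist x I)\<^sup>2) \<le> F x" for x
  proof -
    define d where "d = infdist x I"
    have d0: "d \<ge> 0" unfolding d_def by (rule infdist_nonneg)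
    have dl: "d \<ge> \<bar>x - c\<bar> - ll/2" unfolding d_def c_def ll_def by (rule infdist_lower[OF I])
    have Fge: "F x \<ge> ennreal (real N ^ Suc m) * indicator (Ub N c m) x"
              "F x \<ge> ennreal (4 * ll)"
              "\<And>g. g < m \<Longrightarrow> F x \<ge> ennreal (4 * ll * real N ^ (2*g+2)) * indicator (Ub N c g) x"
    proof -
      fix g assume "g < m"
      have "ennreal (4 * ll * real N ^ (2*g+2)) * indicator (Ub N c g) x
          \<le> (\<Sum>g<m. ennreal (4 * ll * real N ^ (2*g+2)) * indicator (Ub N c g) x)"
        using \<open>g < m\<close> by (intro member_le_sum) auto
      then show "F x \<ge> ennreal (4 * ll * real N ^ (2*g+2)) * indicator (Ub N c g) x"
        unfolding F_def by (intro add_increasing2 add_increasing) auto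
    qed (auto simp: F_def add_increasing2 add_increasing)
    have base: "ll / (ll + d)\<^sup>2 \<le> 1 / ll"
    proof -
      have "ll\<^sup>2 \<le> (ll + d)\<^sup>2" using d0 l0 by (intro power_mono) auto
      then have "ll / (ll + d)\<^sup>2 \<le> ll / ll\<^sup>2" using l0 d0 by (intro divide_left_mono) auto
      then show ?thesis using l0 by (simp add: power2_eq_square)
    qed
    have far: "ll / (ll + d)\<^sup>2 \<le> 4 * ll * r\<^sup>2" if r: "r > 0" "\<bar>x - c\<bar> > 1 / r" "\<bar>x - c\<bar> \<ge> ll" for r
    proof -
      have "d \<ge> \<bar>x - c\<bar> / 2" by (rule half_lem[OF dl r(3)])
      moreover have "1 / (2 * r) = (1 / r) / 2" by simp
      ultimately have "d \<ge> 1 / (2 * r)" using triB r(2) by blast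
      then have "(1 / (2*r))\<^sup>2 \<le> (ll + d)\<^sup>2" using r l0 by (intro power_mono) auto
      then have "ll / (ll + d)\<^sup>2 \<le> ll / (1 / (2*r))\<^sup>2" using l0 r d0 by (intro divide_left_mono) auto
      also have "\<dots> = 4 * ll * r\<^sup>2" using r by (simp add: field_simps power2_eq_square)
      finally show ?thesis .
    qed
    show ?thesis
    proof (cases "x \<in> Ub N c m")
      case True
      have "1 / ll \<le> 1 / (1 / real N ^ Suc m)"
        using l1 Nr l0 unfolding ll_def[symmetric] by (intro divide_left_mono) auto
      then have "1 / ll \<le> real N ^ Suc m" by simp
      then have "ennreal (ll / (ll + d)\<^sup>2) \<le> ennreal (real N ^ Suc m) * indicator (Ub N c m) x"
        using base True by (simp add: ennreal_leI)
      then show ?thesis using Fge(1) unfolding d_def by (meson order_trans)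
    next
      case notm: False
      show ?thesis
      proof (cases "x \<in> Ub N c 0")
        case False
        then have "\<bar>x - c\<bar> > 1 / 1" by (simp add: Ub_mem)
        moreover have "\<bar>x - c\<bar> \<ge> ll" using lt_lem[OF _ l2[folded ll_def] Nm1] calculation by simp
        ultimately have "ll / (ll + d)\<^sup>2 \<le> 4 * ll * 1\<^sup>2" by (intro far) auto
        then have "ennreal (ll / (ll + d)\<^sup>2) \<le> ennreal (4 * ll)" by (simp add: ennreal_leI)
        then show ?thesis using Fge(2) unfolding d_def by (meson order_trans)
      next
        case True
        obtain g where g: "g < m" "x \<in> Ub N c g" "x \<notin> Ub N c (Suc g)"
          using step_exists[of "\<lambda>g. x \<in> Ub N c g", OF True notm] by blast
        have gx: "\<bar>x - c\<bar> > 1 / real N ^ Suc g" using g(3) by (simp add: Ub_mem)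
        have "1 / real N ^ m \<le> 1 / real N ^ Suc g"
          using g(1) Nr by (intro divide_left_mono power_increasing) auto
        then have "\<bar>x - c\<bar> \<ge> ll" using lt_lem[OF gx l2[folded ll_def]] by simp
        then have "ll / (ll + d)\<^sup>2 \<le> 4 * ll * (real N ^ Suc g)\<^sup>2"
          using gx Nr by (intro far) auto
        also have "(real N ^ Suc g)\<^sup>2 = real N ^ (2*g+2)"
        proof -
          have "(real N ^ Suc g)\<^sup>2 = real N ^ (Suc g * 2)" by (rule power_mult[symmetric])
          also have "Suc g * 2 = 2*g+2" by simp
          finally show ?thesis .
        qed
        finally have "ennreal (ll / (ll + d)\<^sup>2) \<le> ennreal (4 * ll * real N ^ (2*g+2)) * indicator (Ub N c g) x"
          using g(2) by (simp add: ennreal_leI)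
        then show ?thesis using Fge(3)[OF g(1)] unfolding d_def by (meson order_trans)
      qed
    qed
  qed
  have P1: "poisson_P I \<mu> \<le> (\<integral>\<^sup>+x. F x \<partial>\<mu>)"
    unfolding poisson_P_def ll_def[symmetric] by (intro nn_integral_mono pw)
  have meas: "f \<in> borel_measurable borel \<Longrightarrow> f \<in> borel_measurable \<mu>" for f :: "real \<Rightarrow> ennreal"
    by (subst measurable_cong_sets[OF sets refl])
  have "(\<integral>\<^sup>+x. F x \<partial>\<mu>) = (\<integral>\<^sup>+x. ennreal (real N ^ Suc m) * indicator (Ub N c m) x \<partial>\<mu>)
      + (\<integral>\<^sup>+x. (\<Sum>g<m. ennreal (4 * ll * real N ^ (2*g+2)) * indicator (Ub N c g) x) \<partial>\<mu>)
      + (\<integral>\<^sup>+x. ennreal (4 * ll) \<partial>\<mu>)"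
  proof -
    have e1: "(\<integral>\<^sup>+x. F x \<partial>\<mu>) = (\<integral>\<^sup>+x. ennreal (real N ^ Suc m) * indicator (Ub N c m) x
      + (\<Sum>g<m. ennreal (4 * ll * real N ^ (2*g+2)) * indicator (Ub N c g) x) \<partial>\<mu>)
      + (\<integral>\<^sup>+x. ennreal (4 * ll) \<partial>\<mu>)"
      unfolding F_def by (rule nn_integral_add; rule meas; measurable)
    have e2: "(\<integral>\<^sup>+x. ennreal (real N ^ Suc m) * indicator (Ub N c m) x
      + (\<Sum>g<m. ennreal (4 * ll * real N ^ (2*g+2)) * indicator (Ub N c g) x) \<partial>\<mu>)
      = (\<integral>\<^sup>+x. ennreal (real N ^ Suc m) * indicator (Ub N c m) x \<partial>\<mu>)
      + (\<integral>\<^sup>+x. (\<Sum>g<m. ennreal (4 * ll * real N ^ (2*g+2)) * indicator (Ub N c g) x) \<partial>\<mu>)"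
      by (rule nn_integral_add; rule meas; measurable)
    show ?thesis using e1 e2 by simp
  qed
  also have "\<dots> = ennreal (real N ^ Suc m) * emeasure \<mu> (Ub N c m)
      + (\<Sum>g<m. ennreal (4 * ll * real N ^ (2*g+2)) * emeasure \<mu> (Ub N c g))
      + ennreal (4 * ll) * emeasure \<mu> UNIV"
  proof -
    have "(\<integral>\<^sup>+x. (\<Sum>g<m. ennreal (4 * ll * real N ^ (2*g+2)) * indicator (Ub N c g) x) \<partial>\<mu>)
       = (\<Sum>g<m. \<integral>\<^sup>+x. ennreal (4 * ll * real N ^ (2*g+2)) * indicator (Ub N c g) x \<partial>\<mu>)"
      by (rule nn_integral_sum; rule meas; measurable)
    then show ?thesis by (simp only: nn_integral_cmult_indicator[OF Um] nn_integral_const space)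
  qed
  also have "\<dots> = ennreal (real N ^ Suc m * measure \<mu> (Ub N c m)
           + (\<Sum>g<m. 4 * ll * real N ^ (2*g+2) * measure \<mu> (Ub N c g))
           + 4 * ll * measure \<mu> UNIV)"
  proof -
    have s: "(\<Sum>g<m. ennreal (4 * ll * real N ^ (2*g+2)) * emeasure \<mu> (Ub N c g))
       = ennreal (\<Sum>g<m. 4 * ll * real N ^ (2*g+2) * measure \<mu> (Ub N c g))"
    proof -
      have "(\<Sum>g<m. ennreal (4 * ll * real N ^ (2*g+2)) * emeasure \<mu> (Ub N c g))
         = (\<Sum>g<m. ennreal (4 * ll * real N ^ (2*g+2) * measure \<mu> (Ub N c g)))"
        using l0 by (intro sum.cong refl) (simp add: emeasure_eq_measure ennreal_mult)
      also have "\<dots> = ennreal (\<Sum>g<m. 4 * ll * real N ^ (2*g+2) * measure \<mu> (Ub N c g))"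
        using l0 by (intro sum_ennreal) simp
      finally show ?thesis .
    qed
    have a: "ennreal (real N ^ Suc m) * emeasure \<mu> (Ub N c m) = ennreal (real N ^ Suc m * measure \<mu> (Ub N c m))"
      by (simp add: emeasure_eq_measure ennreal_mult)
    have b: "ennreal (4 * ll) * emeasure \<mu> UNIV = ennreal (4 * ll * measure \<mu> UNIV)"
      using l0 by (simp add: emeasure_eq_measure ennreal_mult)
    have nn: "0 \<le> (\<Sum>g<m. 4 * ll * real N ^ (2*g+2) * measure \<mu> (Ub N c g))"
      using l0 by (intro sum_nonneg) simp
    show ?thesis unfolding s a b using l0 nn
      by (simp add: ennreal_plus[symmetric] del: ennreal_plus)
  qed
  finally show ?thesis using P1 by simp
qed

context CM
begin

abbreviation "\<sigma> \<equiv> sigma_dot N \<omega>"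

lemma w_def': "cantor_weight N \<omega> k j = (1 / real N ^ (2*k)) / measure \<omega> (cantor_int N k j)"
  by (simp add: cantor_weight_def)

lemma w_nonneg: "cantor_weight N \<omega> k j \<ge> 0"
  unfolding cantor_weight_def by simp

lemma sig_bound:
  assumes A: "A \<in> sets borel" and i: "i < 2 ^ g"
    and sub: "\<And>k j. j < 2 ^ k \<Longrightarrow> cantor_center N k j \<in> A \<Longrightarrow> cantor_center N k j \<in> cantor_int N g i"
  shows "emeasure \<sigma> A \<le> ennreal (2 / real N ^ (2*g) / measure \<omega> (cantor_int N g i))"
proof -
  have N: "real N \<ge> 16" using N16 by simp
  define wJ where "wJ = measure \<omega> (cantor_int N g i)"
  have wJ0: "wJ > 0" unfolding wJ_def using om_pos[OF i] .
  define X where "X = 1 / real N ^ (2*g) / wJ"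
  have X0: "X \<ge> 0" unfolding X_def using wJ0 by simp
  define q :: real where "q = 64 / (15 * real N ^ 2)"
  have N2: "(real N)^2 \<ge> 256" using N power_mono[of 16 "real N" 2] by simp
  have q0: "0 \<le> q" "q \<le> 1/2" unfolding q_def using N2 by (auto simp: divide_simps)
  define b where "b = (\<lambda>k. if k < g then 0 else X * q ^ (k - g))"
  have b0: "\<And>k. b k \<ge> 0" unfolding b_def using X0 q0 by auto
  have trm: "(\<Sum>j<2^k. ennreal (cantor_weight N \<omega> k j) * indicator A (cantor_center N k j)) \<le> ennreal (b k)" for k
  proof (cases "k < g")
    case True
    have "\<And>j. j < 2^k \<Longrightarrow> cantor_center N k j \<notin> A"
      using sub center_not_deeper[OF N16 True i] by blast
    then show ?thesis by (simp add: b_def)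
  next
    case False
    define t where "t = k - g"
    have kt: "k = g + t" unfolding t_def using False by simp
    define W where "W = 1 / real N ^ (2*k) / ((15/32)^t * wJ)"
    have W0: "W \<ge> 0" unfolding W_def using wJ0 by simp
    have each: "cantor_weight N \<omega> k j * indicator A (cantor_center N k j)
        \<le> (if j div 2 ^ t = i then W else 0)" if j: "j < 2 ^ k" for j
    proof (cases "cantor_center N k j \<in> A")
      case False then show ?thesis using W0 by simp
    next
      case True
      then have cJ: "cantor_center N k j \<in> cantor_int N g i" using sub j by blast
      have anc: "cantor_center N k j \<in> cantor_int N g (j div 2 ^ t)"
        using center_in_anc[OF N16, of g k j] kt by simp
      have ilt: "j div 2 ^ t < 2 ^ g" using div_pow_less[OF j, of g] kt by simp
      have eq: "j div 2 ^ t = i"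
        by (rule unique_idx[OF N16 ilt i anc cJ]) (use N in simp)
      have ch: "(15/32)^t * wJ \<le> measure \<omega> (cantor_int N k j)"
        using om_chain'[OF j, of g] kt eq unfolding wJ_def by simp
      have pos: "0 < (15/32::real)^t * wJ" using wJ0 by simp
      have "cantor_weight N \<omega> k j \<le> W"
        unfolding w_def' W_def using ch pos
        by (intro divide_left_mono) auto
      then show ?thesis using True eq by simp
    qed
    have "(\<Sum>j<2^k. ennreal (cantor_weight N \<omega> k j) * indicator A (cantor_center N k j))
        = ennreal (\<Sum>j<2^k. cantor_weight N \<omega> k j * indicator A (cantor_center N k j))"
      by (subst sum_ennreal[symmetric]) (auto simp: w_nonneg ennreal_mult' ennreal_indicator)
    also have "\<dots> \<le> ennreal (\<Sum>j<2^k. (if j div 2 ^ t = i then W else 0))"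
      using each by (intro ennreal_leI sum_mono) auto
    also have "(\<Sum>j<2^k. (if j div 2 ^ t = i then W else 0)) = real (card {j. j < 2 ^ k \<and> j div 2 ^ t = i}) * W"
    proof -
      have "(\<Sum>j<2^k. (if j div 2 ^ t = i then W else 0)) = (\<Sum>j\<in>{j\<in>{..<2^k}. j div 2 ^ t = i}. W)"
        by (rule sum.inter_filter[symmetric]) simp
      also have "{j\<in>{..<2^k}. j div 2 ^ t = i} = {j. j < 2 ^ k \<and> j div 2 ^ t = i}" by auto
      finally show ?thesis by simp
    qed
    also have "\<dots> \<le> 2 ^ t * W"
      using card_desc[of k t i] W0 by (intro mult_right_mono) (auto simp flip: of_nat_le_iff)
    also have "2 ^ t * W = b k"
    proof -
      have "b k = X * q ^ t" unfolding b_def t_def using False by simp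
      also have "\<dots> = 2 ^ t * W"
      proof -
        have p1: "(real N ^ t)^2 = ((real N)^2)^t" by (metis power_mult mult.commute)
        have p2: "(64::real)^t = 2^t * 32^t" by (simp add: power_mult_distrib[symmetric])
        show ?thesis
        unfolding X_def q_def W_def kt using wJ0 N
        by (simp add: field_simps power_mult_distrib power_add power_mult) (simp add: p1 p2 mult_ac)
      qed
      finally show ?thesis by simp
    qed
    finally show ?thesis using ennreal_leI by blast
  qed
  have bs: "b sums (X * (1 / (1 - q)))"
  proof -
    have "(\<lambda>t. q^t) sums (1/(1-q))" by (rule geometric_sums) (use q0 in simp)
    then have "(\<lambda>t. X * q^t) sums (X * (1/(1-q)))" by (rule sums_mult)
    moreover have "(\<lambda>t. b (t+g)) = (\<lambda>t. X * q^t)" unfolding b_def by auto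
    ultimately have "(\<lambda>t. b (t + g)) sums (X * (1 / (1 - q)))" by simp
    then have "b sums (X * (1 / (1 - q)) + (\<Sum>i<g. b i))" using sums_iff_shift[of b g] by blast
    moreover have "(\<Sum>i<g. b i) = 0" unfolding b_def by simp
    ultimately show ?thesis by simp
  qed
  have "emeasure \<sigma> A = (\<Sum>k. \<Sum>j<2^k. ennreal (cantor_weight N \<omega> k j) * indicator A (cantor_center N k j))"
    by (rule emeasure_sigma_dot[OF A])
  also have "\<dots> \<le> (\<Sum>k. ennreal (b k))"
    by (intro suminf_le trm) auto
  also have "(\<Sum>k. ennreal (b k)) = ennreal (X * (1 / (1 - q)))"
  proof -
    have "(\<lambda>k. ennreal (b k)) sums ennreal (X * (1 / (1 - q)))"
      using bs b0 X0 q0 by (subst sums_ennreal) auto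
    then show ?thesis by (rule sums_unique[symmetric])
  qed
  also have "\<dots> \<le> ennreal (2 / real N ^ (2*g) / measure \<omega> (cantor_int N g i))"
  proof (rule ennreal_leI)
    have "1 / (1 - q) \<le> 2" using q0 by (simp add: divide_simps)
    then have "X * (1 / (1 - q)) \<le> X * 2" using X0 by (intro mult_left_mono)
    then show "X * (1 / (1 - q)) \<le> 2 / real N ^ (2*g) / measure \<omega> (cantor_int N g i)"
      unfolding X_def wJ_def by simp
  qed
  finally show ?thesis .
qed

lemma sig_total: "emeasure \<sigma> UNIV \<le> 2"
proof -
  have "emeasure \<sigma> UNIV \<le> ennreal (2 / real N ^ (2*0) / measure \<omega> (cantor_int N 0 0))"
  proof (rule sig_bound)
    fix k j :: nat assume "j < 2 ^ k"
    show "cantor_center N k j \<in> cantor_int N 0 0"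
      using center_in_anc[OF N16, of 0 k j] by (simp add: int0)
  qed auto
  then show ?thesis using om0 by simp
qed

lemma sig_single:
  assumes A: "A \<in> sets borel" and j0: "j0 < 2 ^ k0"
    and sub: "\<And>k j. j < 2 ^ k \<Longrightarrow> cantor_center N k j \<in> A \<Longrightarrow> k = k0 \<and> j = j0"
  shows "emeasure \<sigma> A \<le> ennreal (cantor_weight N \<omega> k0 j0)"
proof -
  define X where "X = ennreal (cantor_weight N \<omega> k0 j0)"
  have trm: "(\<Sum>j<2^k. ennreal (cantor_weight N \<omega> k j) * indicator A (cantor_center N k j))
       \<le> (if k = k0 then X else 0)" for k
  proof -
    have "(\<Sum>j<2^k. ennreal (cantor_weight N \<omega> k j) * indicator A (cantor_center N k j))
       \<le> (\<Sum>j<2^k. if k = k0 \<and> j = j0 then X else 0)"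
    proof (rule sum_mono)
      fix j :: nat assume "j \<in> {..<2^k}"
      then have jk: "j < 2 ^ k" by simp
      show "ennreal (cantor_weight N \<omega> k j) * indicator A (cantor_center N k j) \<le> (if k = k0 \<and> j = j0 then X else 0)"
      proof (cases "cantor_center N k j \<in> A")
        case True
        with sub[OF jk] have "k = k0 \<and> j = j0" by blast
        then show ?thesis using True unfolding X_def by simp
      next
        case False then show ?thesis by simp
      qed
    qed
    also have "\<dots> = (if k = k0 then X else 0)"
    proof (cases "k = k0")
      case True
      then have "(\<Sum>j<2^k. if k = k0 \<and> j = j0 then X else 0) = (\<Sum>j<2^k. if j = j0 then X else 0)" by simp
      also have "\<dots> = X" using j0 True by (simp add: sum.delta)
      finally show ?thesis using True by simp
    qed simp
    finally show ?thesis .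
  qed
  have "emeasure \<sigma> A = (\<Sum>k. \<Sum>j<2^k. ennreal (cantor_weight N \<omega> k j) * indicator A (cantor_center N k j))"
    by (rule emeasure_sigma_dot[OF A])
  also have "\<dots> \<le> (\<Sum>k. if k = k0 then X else 0)"
    by (intro suminf_le trm) auto
  also have "(\<Sum>k. if k = k0 then X else 0) = X"
    using sums_single[of k0 "\<lambda>_. X"] by (simp add: sums_iff)
  finally show ?thesis unfolding X_def .
qed

end

lemma abs3: "\<bar>(x::real) - c\<bar> \<le> r \<Longrightarrow> \<bar>y - c\<bar> \<le> s \<Longrightarrow> \<bar>x - y\<bar> \<le> r + s"
  unfolding abs_le_iff by linarith

definition meets :: "nat \<Rightarrow> real \<Rightarrow> nat \<Rightarrow> nat \<Rightarrow> bool" where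
  "meets N c g i \<longleftrightarrow> i < 2 ^ g \<and> Ub N c g \<inter> cantor_int N g i \<noteq> {}"

lemma Ub_mono:
  assumes "N \<ge> 16" "g \<le> g'"
  shows "Ub N c g' \<subseteq> Ub N c g"
proof -
  have "1 / real N ^ g' \<le> 1 / real N ^ g"
    using assms by (intro divide_left_mono power_increasing) auto
  then show ?thesis unfolding Ub_def by auto
qed

lemma meets_unique:
  assumes N: "N \<ge> 16" and "meets N c g i" "meets N c g i'"
  shows "i = i'"
proof -
  obtain x where x: "x \<in> Ub N c g" "x \<in> cantor_int N g i" using assms(2) unfolding meets_def by blast
  obtain y where y: "y \<in> Ub N c g" "y \<in> cantor_int N g i'" using assms(3) unfolding meets_def by blast
  have "\<bar>x - y\<bar> \<le> 1 / real N ^ g + 1 / real N ^ g"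
    using x(1) y(1) unfolding Ub_mem by (rule abs3)
  also have "\<dots> < (real N - 2) / real N ^ g"
    using N by (simp add: divide_simps)
  finally show ?thesis
    using unique_idx[OF N _ _ x(2) y(2)] assms(2,3) unfolding meets_def by blast
qed

locale Sc = CM +
  fixes c :: real and m h ih :: nat
  assumes h_le: "h \<le> m" and mh: "meets N c h ih"
    and hmax: "\<And>g i. g \<le> m \<Longrightarrow> meets N c g i \<Longrightarrow> g \<le> h"
begin

definition anc :: "nat \<Rightarrow> nat" where "anc g = ih div 2 ^ (h - g)"

lemma ih_lt: "ih < 2 ^ h" using mh unfolding meets_def by simp

lemma anc_h: "anc h = ih" unfolding anc_def by simp

lemma anc_lt: "g \<le> h \<Longrightarrow> anc g < 2 ^ g"
  unfolding anc_def using div_pow_less[OF ih_lt] by simp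

lemma anc_meets:
  assumes "g \<le> h" shows "meets N c g (anc g)"
proof -
  have "cantor_int N h ih \<subseteq> cantor_int N g (anc g)"
    unfolding anc_def by (rule int_nested'[OF N16 assms])
  moreover have "Ub N c h \<subseteq> Ub N c g" by (rule Ub_mono[OF N16 assms])
  ultimately show ?thesis using mh anc_lt[OF assms] unfolding meets_def by blast
qed

lemma anc_succ:
  assumes "g < h" shows "anc (Suc g) div 2 = anc g"
proof -
  have "h - g = Suc (h - Suc g)" using assms by simp
  have "anc (Suc g) div 2 = ih div (2^(h - Suc g) * 2)" unfolding anc_def by (rule div_mult2_eq[symmetric])
  also have "2^(h - Suc g) * 2 = (2::nat)^(h-g)" using \<open>h - g = Suc (h - Suc g)\<close> by simp
  finally show ?thesis by (simp add: anc_def)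
qed

lemma omU_le:
  assumes "g \<le> h"
  shows "measure \<omega> (Ub N c g) \<le> measure \<omega> (cantor_int N g (anc g))"
proof (rule om_le)
  show "Ub N c g \<in> sets borel" by simp
  show "cantor_int N g (anc g) \<in> sets borel" unfolding cantor_int_def by simp
  show "Ub N c g \<inter> cantor_set N \<subseteq> cantor_int N g (anc g)"
  proof
    fix x assume x: "x \<in> Ub N c g \<inter> cantor_set N"
    then obtain i where i: "i < 2 ^ g" "x \<in> cantor_int N g i" using cantor_set_sub[of N g] by blast
    then have "meets N c g i" using x unfolding meets_def by blast
    then have "i = anc g" using meets_unique[OF N16 _ anc_meets[OF assms]] by blast
    then show "x \<in> cantor_int N g (anc g)" using i by simp
  qed
qed

lemma omU_zero:
  assumes "h < g" "g \<le> m"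
  shows "measure \<omega> (Ub N c g) = 0"
proof (rule om_zero)
  show "Ub N c g \<in> sets borel" by simp
  show "Ub N c g \<inter> cantor_set N = {}"
  proof (rule ccontr)
    assume "Ub N c g \<inter> cantor_set N \<noteq> {}"
    then obtain x where x: "x \<in> Ub N c g" "x \<in> cantor_set N" by blast
    then obtain i where i: "i < 2 ^ g" "x \<in> cantor_int N g i" using cantor_set_sub[of N g] by blast
    then have "meets N c g i" using x unfolding meets_def by blast
    then show False using hmax[OF assms(2)] assms(1) by fastforce
  qed
qed

lemma atoms:
  assumes g: "g \<le> m" and j: "j < 2 ^ k" and cU: "cantor_center N k j \<in> Ub N c g"
  shows "(g \<le> h \<and> cantor_center N k j \<in> cantor_int N g (anc g)) \<or> (h < g \<and> k = h \<and> j = ih)"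
proof (cases "g \<le> k")
  case True
  define i' where "i' = j div 2 ^ (k - g)"
  have i'lt: "i' < 2 ^ g" unfolding i'_def using div_pow_less[OF j True] .
  have cI: "cantor_center N k j \<in> cantor_int N g i'" unfolding i'_def by (rule center_in_anc[OF N16 True])
  have "meets N c g i'" using i'lt cI cU unfolding meets_def by blast
  then have gh: "g \<le> h" using hmax[OF g] by blast
  have "i' = anc g" using meets_unique[OF N16 \<open>meets N c g i'\<close> anc_meets[OF gh]] .
  then show ?thesis using gh cI by simp
next
  case False
  then have kg: "k < g" by simp
  have cUk: "cantor_center N k j \<in> Ub N c k" using Ub_mono[OF N16, of k g] kg cU by auto
  have mk: "meets N c k j" using j cUk center_in[OF N16, of k j] unfolding meets_def by blast
  have kh: "k \<le> h" using hmax[OF _ mk] kg g by simp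
  have jk: "j = anc k" using meets_unique[OF N16 mk anc_meets[OF kh]] .
  have "\<not> k < h"
  proof
    assume khl: "k < h"
    have "meets N c (Suc k) (anc (Suc k))" using anc_meets khl by simp
    then obtain y where y: "y \<in> Ub N c (Suc k)" "y \<in> cantor_int N (Suc k) (anc (Suc k))"
      unfolding meets_def by blast
    have far: "\<bar>y - cantor_center N k j\<bar> \<ge> 1 / (2 * real N ^ k) - 1 / real N ^ Suc k"
      using center_far_child[OF N16 y(2)] anc_succ[OF khl] jk by simp
    have cU1: "cantor_center N k j \<in> Ub N c (Suc k)" using Ub_mono[OF N16, of "Suc k" g] kg cU by auto
    have "\<bar>y - cantor_center N k j\<bar> \<le> 1 / real N ^ Suc k + 1 / real N ^ Suc k"
      using y(1) cU1 unfolding Ub_mem by (rule abs3)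
    moreover have "1 / real N ^ Suc k + 1 / real N ^ Suc k < 1 / (2 * real N ^ k) - 1 / real N ^ Suc k"
    proof -
      have N: "real N \<ge> 16" using N16 by simp
      have "3 / real N ^ Suc k < 1 / (2 * real N ^ k)"
        using N by (simp add: divide_simps)
      then show ?thesis by (simp add: field_simps)
    qed
    ultimately show False using far by linarith
  qed
  then have "k = h" using kh by simp
  then show ?thesis using jk anc_h kg by simp
qed

lemma sigU_le:
  assumes "g \<le> h"
  shows "emeasure \<sigma> (Ub N c g) \<le> ennreal (2 / real N ^ (2*g) / measure \<omega> (cantor_int N g (anc g)))"
proof (rule sig_bound)
  show "Ub N c g \<in> sets borel" by simp
  show "anc g < 2 ^ g" by (rule anc_lt[OF assms])
  fix k j assume "j < 2 ^ k" "cantor_center N k j \<in> Ub N c g"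
  then show "cantor_center N k j \<in> cantor_int N g (anc g)"
    using atoms[of g j k] assms h_le by auto
qed

lemma sigU_single:
  assumes "h < g" "g \<le> m"
  shows "emeasure \<sigma> (Ub N c g) \<le> ennreal (cantor_weight N \<omega> h ih)"
proof (rule sig_single)
  show "Ub N c g \<in> sets borel" by simp
  show "ih < 2 ^ h" by (rule ih_lt)
  fix k j assume "j < 2 ^ k" "cantor_center N k j \<in> Ub N c g"
  then show "k = h \<and> j = ih"
    using atoms[of g j k] assms by auto
qed

end

lemma geo1:
  fixes N :: real assumes N: "N \<ge> 16"
  shows "(\<Sum>g\<le>h. N ^ (2*g) * (32/15) ^ (h - g)) \<le> 2 * N ^ (2*h)"
proof (induction h)
  case 0 then show ?case by simp
next
  case (Suc h)
  have "(\<Sum>g\<le>Suc h. N ^ (2*g) * (32/15) ^ (Suc h - g))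
      = (\<Sum>g\<le>h. N ^ (2*g) * (32/15) ^ (Suc h - g)) + N ^ (2 * Suc h)"
    by simp
  also have "(\<Sum>g\<le>h. N ^ (2*g) * (32/15) ^ (Suc h - g)) = 32/15 * (\<Sum>g\<le>h. N ^ (2*g) * (32/15) ^ (h - g))"
    by (simp add: sum_distrib_left Suc_diff_le mult_ac)
  also have "\<dots> \<le> 32/15 * (2 * N ^ (2*h))" using Suc.IH by simp
  also have "N ^ (2 * Suc h) = N^2 * N ^ (2*h)" by (simp add: power_add power_mult power2_eq_square)
  finally have A: "(\<Sum>g\<le>Suc h. N ^ (2*g) * (32/15) ^ (Suc h - g)) \<le> (64/15 + N^2) * N ^ (2*h)"
    by (simp add: algebra_simps)
  have "64/15 + N^2 \<le> 2 * N^2" using N power_mono[of 16 N 2] by simp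
  then have "(64/15 + N^2) * N ^ (2*h) \<le> 2 * N^2 * N ^ (2*h)" using N by (intro mult_right_mono) auto
  also have "2 * N^2 * N ^ (2*h) = 2 * N ^ (2 * Suc h)" by (simp add: power_add power_mult power2_eq_square)
  finally show ?case using A by simp
qed

lemma geo2: "(\<Sum>g\<le>h. (17/32::real) ^ (h - g)) \<le> 3"
proof (induction h)
  case 0 then show ?case by simp
next
  case (Suc h)
  have "(\<Sum>g\<le>Suc h. (17/32::real) ^ (Suc h - g)) = (\<Sum>g\<le>h. (17/32::real) ^ (Suc h - g)) + 1"
    by simp
  also have "(\<Sum>g\<le>h. (17/32::real) ^ (Suc h - g)) = 17/32 * (\<Sum>g\<le>h. (17/32::real) ^ (h - g))"
    by (simp add: sum_distrib_left Suc_diff_le)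
  finally show ?case using Suc.IH by simp
qed

lemma geo3:
  fixes N :: real assumes N: "N \<ge> 16"
  shows "(\<Sum>g\<le>m. N ^ (2*g)) \<le> 2 * N ^ (2*m)"
proof (induction m)
  case 0 then show ?case by simp
next
  case (Suc m)
  have e: "N ^ (2 * Suc m) = N^2 * N ^ (2*m)" by (simp add: power_add power_mult power2_eq_square)
  have "(\<Sum>g\<le>Suc m. N ^ (2*g)) = (\<Sum>g\<le>m. N ^ (2*g)) + N ^ (2 * Suc m)" by simp
  also have "\<dots> \<le> 2 * N ^ (2*m) + N^2 * N ^ (2*m)" unfolding e using Suc.IH by (rule add_right_mono)
  also have "\<dots> = (2 + N^2) * N ^ (2*m)" by (simp add: algebra_simps)
  also have "\<dots> \<le> (2 * N^2) * N ^ (2*m)"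
    using N power_mono[of 16 N 2] by (intro mult_right_mono) auto
  also have "(2 * N^2) * N ^ (2*m) = 2 * N ^ (2 * Suc m)" unfolding e by simp
  finally show ?case .
qed

lemma T_le:
  fixes N ll M :: real and a :: "nat \<Rightarrow> real"
  assumes N: "N \<ge> 16" and a: "\<And>g. a g \<ge> 0" and M: "M \<ge> 0" and l0: "ll > 0" and l2: "ll < 1 / N ^ m"
  shows "N ^ Suc m * a m + (\<Sum>g<m. 4 * ll * N ^ (2*g+2) * a g) + 4 * ll * M
     \<le> (4 * N^2 * (\<Sum>g\<le>m. N ^ (2*g) * a g) + 4 * M) / N ^ m"
proof -
  have Nm: "N ^ m > 0" using N by simp
  have l2': "ll * N ^ m \<le> 1" using l2 Nm by (simp add: field_simps)
  have t1: "N ^ Suc m * a m \<le> 4 * N^2 * (N ^ (2*m) * a m) / N ^ m"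
  proof -
    have "N ^ Suc m * N ^ m = N * N ^ (2*m)" by (simp add: power_add[symmetric] mult_2)
    also have "\<dots> \<le> 4 * N^2 * N ^ (2*m)"
      using N by (intro mult_right_mono) (auto simp: power2_eq_square)
    finally have "N ^ Suc m * N ^ m * a m \<le> 4 * N^2 * N ^ (2*m) * a m"
      using a[of m] by (intro mult_right_mono) auto
    then show ?thesis using Nm by (simp add: field_simps)
  qed
  have t2: "4 * ll * N ^ (2*g+2) * a g \<le> 4 * N^2 * (N ^ (2*g) * a g) / N ^ m" for g
  proof -
    have "4 * ll * N ^ (2*g+2) * a g * N ^ m = (ll * N ^ m) * (4 * N^2 * N ^ (2*g) * a g)"
      by (simp add: power_add algebra_simps power2_eq_square)
    also have "\<dots> \<le> 1 * (4 * N^2 * N ^ (2*g) * a g)"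
      using l2' a[of g] N by (intro mult_right_mono) auto
    finally show ?thesis using Nm by (simp add: field_simps)
  qed
  have t3: "4 * ll * M \<le> 4 * M / N ^ m"
  proof -
    have "4 * ll * M * N ^ m = (ll * N ^ m) * (4 * M)" by (simp add: algebra_simps)
    also have "\<dots> \<le> 1 * (4 * M)" using l2' M by (intro mult_right_mono) auto
    finally show ?thesis using Nm by (simp add: field_simps)
  qed
  have "(\<Sum>g<m. 4 * ll * N ^ (2*g+2) * a g) \<le> (\<Sum>g<m. 4 * N^2 * (N ^ (2*g) * a g) / N ^ m)"
    by (intro sum_mono t2)
  also have "\<dots> = 4 * N^2 * (\<Sum>g<m. N ^ (2*g) * a g) / N ^ m"
    by (simp add: sum_distrib_left sum_divide_distrib)
  finally have s: "(\<Sum>g<m. 4 * ll * N ^ (2*g+2) * a g) \<le> 4 * N^2 * (\<Sum>g<m. N ^ (2*g) * a g) / N ^ m" .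
  have "(\<Sum>g\<le>m. N ^ (2*g) * a g) = (\<Sum>g<m. N ^ (2*g) * a g) + N ^ (2*m) * a m"
    by (simp add: lessThan_Suc_atMost[symmetric])
  then have "(4 * N^2 * (\<Sum>g\<le>m. N ^ (2*g) * a g) + 4 * M) / N ^ m
      = 4 * N^2 * (N ^ (2*m) * a m) / N ^ m + 4 * N^2 * (\<Sum>g<m. N ^ (2*g) * a g) / N ^ m + 4 * M / N ^ m"
    by (simp add: add_divide_distrib algebra_simps)
  then show ?thesis using t1 s t3 by linarith
qed

lemma final_arith:
  fixes N Nm u Tw Ts E F :: real
  assumes N: "N \<ge> 16" and Nm: "Nm \<ge> 1" and u1: "1 \<le> u" and u2: "u \<le> Nm^2"
    and Tw0: "0 \<le> Tw" and Ts0: "0 \<le> Ts"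
    and Tw: "Tw \<le> (4 * N^2 * E + 4) / Nm" and Ts: "Ts \<le> (4 * N^2 * F + 8) / Nm"
    and E: "E \<le> 2 * u" and F: "F \<le> 8 * Nm^2 / u"
  shows "Tw * Ts \<le> 500 * N^4"
proof -
  have N2: "N^2 \<ge> 0" by simp
  have A: "Tw \<le> (8 * N^2 * u + 4) / Nm"
  proof -
    have "4 * N^2 * E \<le> 4 * N^2 * (2 * u)" using E N2 by (intro mult_left_mono) auto
    then have "(4 * N^2 * E + 4) / Nm \<le> (8 * N^2 * u + 4) / Nm" using Nm by (intro divide_right_mono) auto
    then show ?thesis using Tw by linarith
  qed
  have B: "Ts \<le> (32 * N^2 * Nm^2 / u + 8) / Nm"
  proof -
    have "4 * N^2 * F \<le> 4 * N^2 * (8 * Nm^2 / u)" using F N2 by (intro mult_left_mono) auto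
    moreover have "4 * N^2 * (8 * Nm^2 / u) = 32 * N^2 * Nm^2 / u" by simp
    ultimately have "(4 * N^2 * F + 8) / Nm \<le> (32 * N^2 * Nm^2 / u + 8) / Nm" using Nm by (intro divide_right_mono) auto
    then show ?thesis using Ts by linarith
  qed
  have "Tw * Ts \<le> ((8 * N^2 * u + 4) / Nm) * ((32 * N^2 * Nm^2 / u + 8) / Nm)"
    using A B Tw0 Ts0 by (intro mult_mono) auto
  also have "\<dots> = 256 * N^4 + 64 * N^2 * (u / Nm^2) + 128 * N^2 * (1 / u) + 32 * (1 / Nm^2)"
    using Nm u1 by (simp add: field_simps power2_eq_square) (simp add: power4_eq_xxxx)
  also have "\<dots> \<le> 256 * N^4 + 64 * N^2 * 1 + 128 * N^2 * 1 + 32 * 1"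
  proof -
    have "u / Nm^2 \<le> 1" using u2 Nm by (simp add: divide_simps)
    moreover have "1 / u \<le> 1" using u1 by simp
    moreover have "1 / Nm^2 \<le> 1" using Nm by (simp add: divide_simps)
    ultimately show ?thesis using N2
      by (intro add_mono mult_left_mono) auto
  qed
  also have "\<dots> \<le> 500 * N^4"
  proof -
    have "N^2 \<le> N^4" using N by (simp add: power_increasing)
    moreover have "1 \<le> N^4" using N by (simp add: one_le_power)
    ultimately show ?thesis by simp
  qed
  finally show ?thesis .
qed

context CM begin

lemma sig_fin: "finite_measure \<sigma>"
proof (rule finite_measureI)
  have "space \<sigma> = UNIV" using sets_eq_imp_space_eq[OF sets_sigma_dot[of N \<omega>]] by simp
  moreover have "emeasure \<sigma> UNIV < \<infinity>" using le_less_trans[OF sig_total, of \<infinity>] by simp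
  ultimately show "emeasure \<sigma> (space \<sigma>) \<noteq> \<infinity>" by simp
qed

lemma msig_le:
  assumes "emeasure \<sigma> A \<le> ennreal x" "x \<ge> 0"
  shows "measure \<sigma> A \<le> x"
  using assms finite_measure.emeasure_eq_measure[OF sig_fin, of A] by simp

lemma msig_total: "measure \<sigma> UNIV \<le> 2"
  using msig_le[of UNIV 2] sig_total by simp

end

context Sc begin

abbreviation "omh \<equiv> measure \<omega> (cantor_int N h ih)"

lemma omh_pos: "omh > 0" using om_pos[OF ih_lt] .

lemma E_bound:
  "(\<Sum>g\<le>m. real N ^ (2*g) * measure \<omega> (Ub N c g)) \<le> 2 * real N ^ (2*h) * omh"
proof -
  have N: "real N \<ge> 16" using N16 by simp
  have tb: "real N ^ (2*g) * measure \<omega> (Ub N c g) \<le> (if g \<le> h then real N ^ (2*g) * (32/15)^(h-g) * omh else 0)"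
    if "g \<in> {..m}" for g
  proof (cases "g \<le> h")
    case True
    have ch: "(15/32)^(h-g) * measure \<omega> (cantor_int N g (anc g)) \<le> omh"
      using om_chain'[OF ih_lt True] unfolding anc_def by simp
    have "measure \<omega> (cantor_int N g (anc g)) = (32/15)^(h-g) * ((15/32)^(h-g) * measure \<omega> (cantor_int N g (anc g)))"
      by (simp add: power_mult_distrib[symmetric])
    also have "\<dots> \<le> (32/15)^(h-g) * omh" using ch by (intro mult_left_mono) auto
    finally have "measure \<omega> (Ub N c g) \<le> (32/15)^(h-g) * omh" using omU_le[OF True] by linarith
    then have "real N ^ (2*g) * measure \<omega> (Ub N c g) \<le> real N ^ (2*g) * ((32/15)^(h-g) * omh)"
      by (rule mult_left_mono) simp
    then show ?thesis using True by (simp add: mult.assoc)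
  next
    case False
    then show ?thesis using omU_zero[of g] that by simp
  qed
  have "(\<Sum>g\<le>m. real N ^ (2*g) * measure \<omega> (Ub N c g))
      \<le> (\<Sum>g\<le>m. if g \<le> h then real N ^ (2*g) * (32/15)^(h-g) * omh else 0)"
    by (rule sum_mono[OF tb])
  also have "\<dots> = (\<Sum>g\<in>{g\<in>{..m}. g \<le> h}. real N ^ (2*g) * (32/15)^(h-g) * omh)"
    by (rule sum.inter_filter[symmetric]) simp
  also have "{g\<in>{..m}. g \<le> h} = {..h}" using h_le by auto
  also have "(\<Sum>g\<in>{..h}. real N ^ (2*g) * (32/15)^(h-g) * omh) = (\<Sum>g\<le>h. real N ^ (2*g) * (32/15)^(h-g)) * omh"
    by (simp add: sum_distrib_right)
  also have "\<dots> \<le> (2 * real N ^ (2*h)) * omh"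
    using geo1[OF N, of h] omh_pos by (intro mult_right_mono) auto
  finally show ?thesis by simp
qed

lemma F_bound:
  "(\<Sum>g\<le>m. real N ^ (2*g) * measure \<sigma> (Ub N c g)) \<le> 8 * real N ^ (2*m) / (real N ^ (2*h) * omh)"
proof -
  have N: "real N \<ge> 16" using N16 by simp
  define Y where "Y = 1 / (real N ^ (2*h) * omh)"
  have Y0: "Y \<ge> 0" unfolding Y_def using omh_pos by simp
  have tb: "real N ^ (2*g) * measure \<sigma> (Ub N c g) \<le> (if g \<le> h then 2 * (17/32)^(h-g) / omh else 0) + real N ^ (2*g) * Y"
    if "g \<in> {..m}" for g
  proof (cases "g \<le> h")
    case True
    have ag: "measure \<omega> (cantor_int N g (anc g)) > 0" using om_pos[OF anc_lt[OF True]] .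
    have ch: "omh \<le> (17/32)^(h-g) * measure \<omega> (cantor_int N g (anc g))"
      using om_chain'[OF ih_lt True] unfolding anc_def by simp
    have s: "measure \<sigma> (Ub N c g) \<le> 2 / real N ^ (2*g) / measure \<omega> (cantor_int N g (anc g))"
      using msig_le[OF sigU_le[OF True]] ag by simp
    have "real N ^ (2*g) * measure \<sigma> (Ub N c g) \<le> real N ^ (2*g) * (2 / real N ^ (2*g) / measure \<omega> (cantor_int N g (anc g)))"
      using s by (intro mult_left_mono) auto
    also have "\<dots> = 2 / measure \<omega> (cantor_int N g (anc g))" using N by simp
    also have "\<dots> \<le> 2 * (17/32)^(h-g) / omh"
      using ch ag omh_pos by (simp add: divide_simps mult.commute)
    moreover have "real N ^ (2*g) * Y \<ge> 0" using Y0 by simp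
    ultimately show ?thesis using True by simp
  next
    case False
    have s: "measure \<sigma> (Ub N c g) \<le> cantor_weight N \<omega> h ih"
      using msig_le[OF sigU_single] False that w_nonneg by simp
    have "cantor_weight N \<omega> h ih = Y" unfolding w_def' Y_def by simp
    then show ?thesis using s False by (simp add: mult_left_mono)
  qed
  have "(\<Sum>g\<le>m. real N ^ (2*g) * measure \<sigma> (Ub N c g))
      \<le> (\<Sum>g\<le>m. (if g \<le> h then 2 * (17/32)^(h-g) / omh else 0) + real N ^ (2*g) * Y)"
    by (rule sum_mono[OF tb])
  also have "\<dots> = (\<Sum>g\<le>m. (if g \<le> h then 2 * (17/32)^(h-g) / omh else 0)) + (\<Sum>g\<le>m. real N ^ (2*g)) * Y"
    by (simp add: sum.distrib sum_distrib_right)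
  also have "(\<Sum>g\<le>m. (if g \<le> h then 2 * (17/32)^(h-g) / omh else 0)) = (\<Sum>g\<in>{g\<in>{..m}. g \<le> h}. 2 * (17/32)^(h-g) / omh)"
    by (rule sum.inter_filter[symmetric]) simp
  also have "{g\<in>{..m}. g \<le> h} = {..h}" using h_le by auto
  also have "(\<Sum>g\<in>{..h}. 2 * (17/32)^(h-g) / omh) = 2 * (\<Sum>g\<le>h. (17/32::real)^(h-g)) / omh"
    by (simp add: sum_distrib_left sum_divide_distrib)
  also have "\<dots> \<le> 2 * 3 / omh"
    using geo2[of h] omh_pos by (intro divide_right_mono mult_left_mono) auto
  also have "(\<Sum>g\<le>m. real N ^ (2*g)) * Y \<le> (2 * real N ^ (2*m)) * Y"
    using geo3[OF N, of m] Y0 by (intro mult_right_mono) auto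
  also have "2 * 3 / omh = 6 * real N ^ (2*h) * Y" unfolding Y_def using N omh_pos by simp
  also have "6 * real N ^ (2*h) * Y \<le> 6 * real N ^ (2*m) * Y"
    using Y0 N h_le by (intro mult_right_mono mult_left_mono power_increasing) auto
  finally have "(\<Sum>g\<le>m. real N ^ (2*g) * measure \<sigma> (Ub N c g)) \<le> 8 * real N ^ (2*m) * Y"
    by (simp add: algebra_simps)
  then show ?thesis unfolding Y_def by simp
qed

end

lemma scale_exists:
  assumes N: "N \<ge> 16" and l: "0 < ll" "ll < 1"
  shows "\<exists>m. 1 / real N ^ Suc m \<le> ll \<and> ll < 1 / real N ^ m"
proof (rule ccontr)
  assume nex: "\<not> ?thesis"
  have all: "ll < 1 / real N ^ m" for m
  proof (induction m)
    case 0 then show ?case using l by simp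
  next
    case (Suc m) then show ?case using nex by force
  qed
  have "1 / real N < 1" using N by simp
  then obtain n where "(1 / real N) ^ n < ll" using real_arch_pow_inv[OF l(1)] by blast
  then show False using all[of n] by (simp add: power_one_over)
qed

lemma P_le_total:
  fixes \<mu> :: "real measure"
  assumes I: "bounded I" "I \<noteq> {}" and l: "Sup I - Inf I \<ge> 1"
  shows "poisson_P I \<mu> \<le> emeasure \<mu> (space \<mu>)"
proof -
  have "poisson_P I \<mu> \<le> (\<integral>\<^sup>+x. 1 \<partial>\<mu>)"
    unfolding poisson_P_def
  proof (intro nn_integral_mono)
    fix x
    define ll where "ll = Sup I - Inf I"
    have d0: "infdist x I \<ge> 0" by (rule infdist_nonneg)
    have l1: "ll \<ge> 1" using l unfolding ll_def .
    have "ll\<^sup>2 \<le> (ll + infdist x I)\<^sup>2" using d0 l1 by (intro power_mono) auto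
    then have "ll / (ll + infdist x I)\<^sup>2 \<le> ll / ll\<^sup>2" using l1 d0 by (intro divide_left_mono) auto
    also have "\<dots> = 1 / ll" using l1 by (simp add: power2_eq_square)
    also have "\<dots> \<le> 1" using l1 by simp
    finally show "ennreal ((Sup I - Inf I) / ((Sup I - Inf I) + infdist x I)\<^sup>2) \<le> 1"
      unfolding ll_def by (simp add: ennreal_le_1)
  qed
  then show ?thesis by simp
qed

lemma P_zero:
  assumes "Sup I - Inf I = 0"
  shows "poisson_P I \<mu> = 0"
  unfolding poisson_P_def using assms by simp

lemma len_nonneg:
  fixes I :: "real set"
  assumes "bounded I" "I \<noteq> {}"
  shows "Sup I - Inf I \<ge> 0"
proof -
  obtain y where "y \<in> I" using assms by blast
  then show ?thesis using interval_bounds[OF assms] by force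
qed

lemma ennreal_prod_le:
  assumes "a \<le> ennreal x" "b \<le> ennreal y" "x \<ge> 0" "y \<ge> 0" "x * y \<le> z"
  shows "a * b \<le> ennreal z"
proof -
  have "a * b \<le> ennreal x * ennreal y" using assms by (intro mult_mono) auto
  also have "\<dots> = ennreal (x * y)" using assms by (simp add: ennreal_mult)
  also have "\<dots> \<le> ennreal z" using assms by (intro ennreal_leI)
  finally show ?thesis .
qed

context CM begin

lemma upper_small:
  assumes I: "bounded I" "I \<noteq> {}" and l: "0 < Sup I - Inf I" "Sup I - Inf I < 1"
  shows "poisson_P I \<omega> * poisson_P I \<sigma> \<le> ennreal (500 * real N ^ 4)"
proof -
  define ll where "ll = Sup I - Inf I"
  define c where "c = (Inf I + Sup I) / 2"
  have N: "real N \<ge> 16" using N16 by simp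
  obtain m where m: "1 / real N ^ Suc m \<le> ll" "ll < 1 / real N ^ m"
    using scale_exists[OF N16 l[folded ll_def]] by blast
  have fin_om: "finite_measure \<omega>" by (rule P.finite_measure_axioms)
  have Pw: "poisson_P I \<omega> \<le> ennreal (real N ^ Suc m * measure \<omega> (Ub N c m)
           + (\<Sum>g<m. 4 * ll * real N ^ (2*g+2) * measure \<omega> (Ub N c g))
           + 4 * ll * measure \<omega> UNIV)"
    unfolding ll_def c_def by (rule P_split[OF N16 sets_om fin_om I m[unfolded ll_def]])
  have Ps: "poisson_P I \<sigma> \<le> ennreal (real N ^ Suc m * measure \<sigma> (Ub N c m)
           + (\<Sum>g<m. 4 * ll * real N ^ (2*g+2) * measure \<sigma> (Ub N c g))
           + 4 * ll * measure \<sigma> UNIV)"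
    unfolding ll_def c_def by (rule P_split[OF N16 sets_sigma_dot sig_fin I m[unfolded ll_def]])
  define Tw where "Tw = real N ^ Suc m * measure \<omega> (Ub N c m)
           + (\<Sum>g<m. 4 * ll * real N ^ (2*g+2) * measure \<omega> (Ub N c g))
           + 4 * ll * measure \<omega> UNIV"
  define Ts where "Ts = real N ^ Suc m * measure \<sigma> (Ub N c m)
           + (\<Sum>g<m. 4 * ll * real N ^ (2*g+2) * measure \<sigma> (Ub N c g))
           + 4 * ll * measure \<sigma> UNIV"
  have l0: "ll > 0" using l unfolding ll_def by simp
  have Tw0: "Tw \<ge> 0" unfolding Tw_def using l0 by (intro add_nonneg_nonneg sum_nonneg) auto
  have Ts0: "Ts \<ge> 0" unfolding Ts_def using l0 by (intro add_nonneg_nonneg sum_nonneg) auto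
  define Ew where "Ew = (\<Sum>g\<le>m. real N ^ (2*g) * measure \<omega> (Ub N c g))"
  define Es where "Es = (\<Sum>g\<le>m. real N ^ (2*g) * measure \<sigma> (Ub N c g))"
  have Nm: "real N ^ m \<ge> 1" using N by (simp add: one_le_power)
  have Tw_le: "Tw \<le> (4 * (real N)^2 * Ew + 4) / real N ^ m"
  proof -
    have "Tw \<le> (4 * (real N)^2 * Ew + 4 * measure \<omega> UNIV) / real N ^ m"
      unfolding Tw_def Ew_def by (rule T_le[OF N _ _ l0 m(2)]) auto
    also have "\<dots> \<le> (4 * (real N)^2 * Ew + 4) / real N ^ m"
      using om_le1[of UNIV] Nm by (intro divide_right_mono) auto
    finally show ?thesis .
  qed
  have Ts_le: "Ts \<le> (4 * (real N)^2 * Es + 8) / real N ^ m"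
  proof -
    have "Ts \<le> (4 * (real N)^2 * Es + 4 * measure \<sigma> UNIV) / real N ^ m"
      unfolding Ts_def Es_def by (rule T_le[OF N _ _ l0 m(2)]) auto
    also have "\<dots> \<le> (4 * (real N)^2 * Es + 8) / real N ^ m"
      using msig_total Nm by (intro divide_right_mono) auto
    finally show ?thesis .
  qed
  have prod: "Tw * Ts \<le> 500 * real N ^ 4"
  proof (cases "meets N c 0 0")
    case True
    define P where "P = (\<lambda>g. g \<le> m \<and> (\<exists>i. meets N c g i))"
    have P0: "P 0" unfolding P_def using True by blast
    have Pb: "\<And>y. P y \<Longrightarrow> y \<le> m" unfolding P_def by blast
    define h where "h = (GREATEST g. P g)"
    have Ph: "P h" unfolding h_def by (rule GreatestI_nat[of P 0 m, OF P0 Pb])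
    then obtain ih where ih: "meets N c h ih" and hm: "h \<le> m" unfolding P_def by blast
    have hmax: "g \<le> h" if "g \<le> m" "meets N c g i" for g i
    proof -
      have Pg: "P g" unfolding P_def using that by blast
      show ?thesis unfolding h_def by (rule Greatest_le_nat[of P g m, OF Pg Pb])
    qed
    have SA: "Sc_axioms N c m h ih"
      by (rule Sc_axioms.intro[OF hm ih hmax])
    interpret S: Sc N \<omega> c m h ih
      by (rule Sc.intro[OF CM_axioms SA])
    have E: "Ew \<le> 2 * real N ^ (2*h) * S.omh" unfolding Ew_def by (rule S.E_bound)
    have F: "Es \<le> 8 * real N ^ (2*m) / (real N ^ (2*h) * S.omh)" unfolding Es_def by (rule S.F_bound)
    define u where "u = real N ^ (2*h) * S.omh"
    have u1: "1 \<le> u"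
    proof -
      have "(15/32)^h \<le> S.omh" using om_lower[OF S.ih_lt] .
      then have "real N ^ (2*h) * (15/32)^h \<le> u" unfolding u_def by (intro mult_left_mono) auto
      moreover have "real N ^ (2*h) * (15/32)^h = ((real N)^2 * (15/32))^h"
        by (simp only: power_mult power_mult_distrib)
      moreover have "1 \<le> ((real N)^2 * (15/32))^h"
      proof (rule one_le_power)
        have "(real N)^2 \<ge> 256" using N power_mono[of 16 "real N" 2] by simp
        then show "1 \<le> (real N)^2 * (15/32)" by simp
      qed
      ultimately show ?thesis by linarith
    qed
    have u2: "u \<le> (real N ^ m)^2"
    proof -
      have "u \<le> real N ^ (2*h) * 1" unfolding u_def using om_le1 by (intro mult_left_mono) auto
      also have "\<dots> \<le> real N ^ (2*m)" using N hm by (simp add: power_increasing)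
      also have "\<dots> = (real N ^ m)^2" by (simp add: power_mult[symmetric] mult.commute)
      finally show ?thesis .
    qed
    have F': "Es \<le> 8 * (real N ^ m)^2 / u"
      using F unfolding u_def by (simp add: power_mult[symmetric] mult.commute)
    have E': "Ew \<le> 2 * u" using E unfolding u_def by (simp add: mult.assoc)
    show ?thesis
      by (rule final_arith[OF N Nm u1 u2 Tw0 Ts0 Tw_le Ts_le E' F'])
  next
    case False
    have U0: "Ub N c 0 \<inter> {0..1} = {}"
      using False int0[of N 0] unfolding meets_def by auto
    have Ug: "Ub N c g \<inter> {0..1} = {}" for g
      using U0 Ub_mono[OF N16, of 0 g] by auto
    have ow: "measure \<omega> (Ub N c g) = 0" for g
      by (rule om_zero) (use Ug[of g] cantor_set_sub01[of N] in auto)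
    have os: "measure \<sigma> (Ub N c g) = 0" for g
    proof -
      have "emeasure \<sigma> (Ub N c g) = (\<Sum>k. \<Sum>j<2^k. ennreal (cantor_weight N \<omega> k j) * indicator (Ub N c g) (cantor_center N k j))"
        by (rule emeasure_sigma_dot) simp
      also have "\<dots> = 0"
      proof -
        have "cantor_center N k j \<notin> Ub N c g" for k j
          using center_in_anc[OF N16, of 0 k j] int0[of N "j div 2 ^ (k - 0)"] Ug[of g] by auto
        then show ?thesis by simp
      qed
      finally show ?thesis by (simp add: measure_def)
    qed
    have "Ew = 0" "Es = 0" unfolding Ew_def Es_def using ow os by simp_all
    moreover have "4 / real N ^ m \<le> 4 / 1" using Nm N16 by (intro divide_left_mono) auto
    moreover have "8 / real N ^ m \<le> 8 / 1" using Nm N16 by (intro divide_left_mono) auto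
    ultimately have "Tw \<le> 4" "Ts \<le> 8"
      using Tw_le Ts_le by simp_all
    then have "Tw * Ts \<le> 4 * 8" using Tw0 Ts0 by (intro mult_mono) auto
    also have "(4 * 8 :: real) \<le> 500 * real N ^ 4"
    proof -
      have "1 \<le> real N ^ 4" using N by (simp add: one_le_power)
      then show ?thesis by simp
    qed
    finally show ?thesis .
  qed
  show ?thesis
    by (rule ennreal_prod_le[OF Pw[folded Tw_def] Ps[folded Ts_def] Tw0 Ts0 prod])
qed

end

context CM begin

lemma P_lower:
  fixes \<mu> :: "real measure"
  assumes sets: "sets \<mu> = sets borel"
  shows "poisson_P (cantor_int N k j) \<mu> \<ge> ennreal (real N ^ k) * emeasure \<mu> (cantor_int N k j)"
proof -
  define a where "a = cantor_left N k j"
  define r where "r = 1 / real N ^ k"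
  have r0: "r > 0" unfolding r_def using N16 by simp
  have I: "cantor_int N k j = {a..a+r}" unfolding cantor_int_def a_def r_def by simp
  have len: "Sup (cantor_int N k j) - Inf (cantor_int N k j) = r" unfolding I using r0 by simp
  have Im: "cantor_int N k j \<in> sets \<mu>" using sets unfolding I by simp
  have "ennreal (real N ^ k) * emeasure \<mu> (cantor_int N k j)
      = (\<integral>\<^sup>+x. ennreal (real N ^ k) * indicator (cantor_int N k j) x \<partial>\<mu>)"
    by (rule nn_integral_cmult_indicator[OF Im, symmetric])
  also have "\<dots> \<le> poisson_P (cantor_int N k j) \<mu>"
    unfolding poisson_P_def len
  proof (intro nn_integral_mono)
    fix x
    show "ennreal (real N ^ k) * indicator (cantor_int N k j) x \<le> ennreal (r / (r + infdist x (cantor_int N k j))\<^sup>2)"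
    proof (cases "x \<in> cantor_int N k j")
      case True
      then have "infdist x (cantor_int N k j) = 0" by simp
      moreover have "r / r\<^sup>2 = real N ^ k" unfolding r_def using N16 by (simp add: power2_eq_square)
      ultimately show ?thesis using True by simp
    qed simp
  qed
  finally show ?thesis .
qed

lemma sig_lower:
  assumes j: "j < 2 ^ k"
  shows "emeasure \<sigma> (cantor_int N k j) \<ge> ennreal (cantor_weight N \<omega> k j)"
proof -
  define f where "f = (\<lambda>k. \<Sum>j<2^k. ennreal (cantor_weight N \<omega> k j) * indicator (cantor_int N k j) (cantor_center N k j))"
  have "ennreal (cantor_weight N \<omega> k j) = ennreal (cantor_weight N \<omega> k j) * indicator (cantor_int N k j) (cantor_center N k j)"
    using center_in[OF N16] by simp
  also have "\<dots> \<le> (\<Sum>j'<2^k. ennreal (cantor_weight N \<omega> k j') * indicator (cantor_int N k j) (cantor_center N k j'))"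
    using j by (intro member_le_sum[of j "{..<2^k}" "\<lambda>j'. ennreal (cantor_weight N \<omega> k j') * indicator (cantor_int N k j) (cantor_center N k j')"]) auto
  also have "\<dots> \<le> (\<Sum>k'. \<Sum>j'<2^k'. ennreal (cantor_weight N \<omega> k' j') * indicator (cantor_int N k j) (cantor_center N k' j'))"
    using sum_le_suminf[of "\<lambda>k'. \<Sum>j'<2^k'. ennreal (cantor_weight N \<omega> k' j') * indicator (cantor_int N k j) (cantor_center N k' j')" "{k}"]
    by (simp add: summableI)
  also have "\<dots> = emeasure \<sigma> (cantor_int N k j)"
    by (rule emeasure_sigma_dot[symmetric]) (simp add: cantor_int_def)
  finally show ?thesis .
qed

lemma lower:
  assumes j: "j < 2 ^ k"
  shows "ennreal 1 \<le> poisson_P (cantor_int N k j) \<omega> * poisson_P (cantor_int N k j) \<sigma>"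
proof -
  define p where "p = measure \<omega> (cantor_int N k j)"
  have p0: "p > 0" unfolding p_def using om_pos[OF j] .
  have A: "ennreal (real N ^ k * p) \<le> poisson_P (cantor_int N k j) \<omega>"
    using P_lower[OF sets_om, of k j] unfolding p_def by (simp add: om_emeasure_eq ennreal_mult)
  have B: "ennreal (real N ^ k * cantor_weight N \<omega> k j) \<le> poisson_P (cantor_int N k j) \<sigma>"
  proof -
    have "ennreal (real N ^ k * cantor_weight N \<omega> k j) = ennreal (real N ^ k) * ennreal (cantor_weight N \<omega> k j)"
      using w_nonneg by (simp add: ennreal_mult)
    also have "\<dots> \<le> ennreal (real N ^ k) * emeasure \<sigma> (cantor_int N k j)"
      using sig_lower[OF j] by (intro mult_left_mono) auto
    also have "\<dots> \<le> poisson_P (cantor_int N k j) \<sigma>" by (rule P_lower[OF sets_sigma_dot])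
    finally show ?thesis .
  qed
  have "(real N ^ k * p) * (real N ^ k * cantor_weight N \<omega> k j) = 1"
  proof -
    have e: "real N ^ k * real N ^ k = real N ^ (2*k)" by (simp add: power_add[symmetric] mult_2)
    have q: "real N ^ (2*k) > 0" using N16 by simp
    have "(real N ^ k * p) * (real N ^ k * cantor_weight N \<omega> k j)
        = (real N ^ k * real N ^ k) * p * (1 / real N ^ (2*k) / p)"
      unfolding w_def' p_def by (simp add: mult_ac)
    also have "\<dots> = 1" unfolding e using p0 q by simp
    finally show ?thesis .
  qed
  then have "ennreal 1 = ennreal (real N ^ k * p) * ennreal (real N ^ k * cantor_weight N \<omega> k j)"
    using p0 w_nonneg by (simp add: ennreal_mult[symmetric])
  also have "\<dots> \<le> poisson_P (cantor_int N k j) \<omega> * poisson_P (cantor_int N k j) \<sigma>"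
    using A B by (intro mult_mono) auto
  finally show ?thesis .
qed

end

theorem mainTheorem5:
  fixes N :: nat and \<omega> :: "real measure"
  assumes "N \<ge> 16"
    and "redistributed_cantor_measure N \<omega>"
  shows "\<exists>C::real. 0 < C \<and>
     (\<forall>I::real set. is_interval I \<and> bounded I \<and> I \<noteq> {} \<longrightarrow>
        poisson_P I \<omega> * poisson_P I (sigma_dot N \<omega>) \<le> ennreal C) \<and>
     (\<forall>k j. j < 2^k \<longrightarrow>
        ennreal (1 / C) \<le> poisson_P (cantor_int N k j) \<omega> * poisson_P (cantor_int N k j) (sigma_dot N \<omega>))"
proof -
  interpret CM N \<omega> using assms by unfold_locales
  define C where "C = 500 * real N ^ 4"
  have N: "real N \<ge> 16" using assms(1) by simp
  have "1 \<le> real N ^ 4" using N by (simp add: one_le_power)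
  then have C1: "C \<ge> 2" unfolding C_def by simp
  have up: "poisson_P I \<omega> * poisson_P I \<sigma> \<le> ennreal C" if I: "bounded I" "I \<noteq> {}" for I
  proof -
    have l0: "Sup I - Inf I \<ge> 0" by (rule len_nonneg[OF I])
    consider "Sup I - Inf I = 0" | "0 < Sup I - Inf I" "Sup I - Inf I < 1" | "Sup I - Inf I \<ge> 1"
      using l0 by linarith
    then show ?thesis
    proof cases
      case 1 then show ?thesis by (simp add: P_zero)
    next
      case 2 then show ?thesis unfolding C_def by (rule upper_small[OF I])
    next
      case 3
      have a: "poisson_P I \<omega> \<le> ennreal 1"
        using P_le_total[OF I 3, of \<omega>] P.emeasure_space_1 by simp
      have sp: "space \<sigma> = UNIV" using sets_eq_imp_space_eq[OF sets_sigma_dot[of N \<omega>]] by simp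
      have b: "poisson_P I \<sigma> \<le> ennreal 2"
        using P_le_total[OF I 3, of \<sigma>] sig_total sp by simp
      show ?thesis by (rule ennreal_prod_le[OF a b]) (use C1 in auto)
    qed
  qed
  have lo: "ennreal (1 / C) \<le> poisson_P (cantor_int N k j) \<omega> * poisson_P (cantor_int N k j) \<sigma>"
    if "j < 2 ^ k" for k j
  proof -
    have "ennreal (1 / C) \<le> ennreal 1" using C1 by (intro ennreal_leI) simp
    also have "\<dots> \<le> poisson_P (cantor_int N k j) \<omega> * poisson_P (cantor_int N k j) \<sigma>" by (rule lower[OF that])
    finally show ?thesis .
  qed
  show ?thesis
    using C1 up lo by (intro exI[of _ C]) auto
qed

end
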